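(* Let $X$ be a uniformly locally finite metric space with infinitely many points. Then there exists a flow on $\mathrm{C}^*_u(X)$ which is not coarse.
   Context: Uniformly locally finite: $\sup_x|B_r(x)|<\infty$ for all $r>0$. A partial translation is a bijection $f\colon\mathrm{dom}(f)\subseteq X\to\mathrm{ran}(f)\subseteq X$ with $\sup_{x\in\mathrm{dom}(f)}d(x,f(x))<\infty$; $v_f\delta_x=\delta_{f(x)}$ for $x\in\mathrm{dom}(f)$, $0$ otherwise; $\mathrm{C}^*_u(X)$ is the $\mathrm{C}^*$-subalgebra of $\mathcal{B}(\ell_2(X))$ generated by all $v_f$. A flow on $\mathrm{C}^*_u(X)$ is a group homomorphism $\sigma\colon\mathbb{R}\to\mathrm{Aut}(\mathrm{C}^*_u(X))$ with $t\mapsto\sigma_t(a)$ norm continuous for each $a$; it is coarse if $t\mapsto\sigma_t(v_f)$ is norm differentiable for every partial translation $f$. *)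

theory Defs
  imports "HOL-Analysis.Analysis"
begin

definition ell2 :: "('a \<Rightarrow> complex) set" where
  "ell2 = {g. (\<lambda>x. (cmod (g x))\<^sup>2) summable_on UNIV}"

definition l2norm :: "('a \<Rightarrow> complex) \<Rightarrow> real" where
  "l2norm g = sqrt (infsum (\<lambda>x. (cmod (g x))\<^sup>2) UNIV)"

definition l2inner :: "('a \<Rightarrow> complex) \<Rightarrow> ('a \<Rightarrow> complex) \<Rightarrow> complex" where
  "l2inner g h = infsum (\<lambda>x. cnj (g x) * h x) UNIV"

text \<open>An operator is a map on functions; we normalise it to be 0 outside ell2,
  so that bounded operators on ell2(X) correspond bijectively to such maps.\<close>
type_synonym 'a op = "('a \<Rightarrow> complex) \<Rightarrow> ('a \<Rightarrow> complex)"

definition bounded_op :: "'a op \<Rightarrow> bool" where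
  "bounded_op T \<longleftrightarrow>
     (\<forall>g\<in>ell2. T g \<in> ell2) \<and>
     (\<forall>g\<in>ell2. \<forall>h\<in>ell2. \<forall>c::complex. T (\<lambda>x. g x + c * h x) = (\<lambda>x. T g x + c * T h x)) \<and>
     (\<exists>K. \<forall>g\<in>ell2. l2norm (T g) \<le> K * l2norm g) \<and>
     (\<forall>g. g \<notin> ell2 \<longrightarrow> T g = (\<lambda>_. 0))"

definition op_norm :: "'a op \<Rightarrow> real" where
  "op_norm T = Sup {l2norm (T g) | g. g \<in> ell2 \<and> l2norm g \<le> 1}"

definition op_zero :: "'a op" where "op_zero = (\<lambda>g x. 0)"
definition op_add :: "'a op \<Rightarrow> 'a op \<Rightarrow> 'a op" where "op_add S T = (\<lambda>g x. S g x + T g x)"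
definition op_diff :: "'a op \<Rightarrow> 'a op \<Rightarrow> 'a op" where "op_diff S T = (\<lambda>g x. S g x - T g x)"
definition op_scale :: "complex \<Rightarrow> 'a op \<Rightarrow> 'a op" where "op_scale c T = (\<lambda>g x. c * T g x)"
definition op_mult :: "'a op \<Rightarrow> 'a op \<Rightarrow> 'a op" where "op_mult S T = (\<lambda>g. S (T g))"

definition is_adjoint :: "'a op \<Rightarrow> 'a op \<Rightarrow> bool" where
  "is_adjoint T S \<longleftrightarrow> (\<forall>g\<in>ell2. \<forall>h\<in>ell2. l2inner (T g) h = l2inner g (S h))"

definition cstar_subalg :: "'a op set \<Rightarrow> bool" where
  "cstar_subalg A \<longleftrightarrow>
     A \<subseteq> {T. bounded_op T} \<and> op_zero \<in> A \<and>
     (\<forall>S\<in>A. \<forall>T\<in>A. op_add S T \<in> A) \<and>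
     (\<forall>c. \<forall>T\<in>A. op_scale c T \<in> A) \<and>
     (\<forall>S\<in>A. \<forall>T\<in>A. op_mult S T \<in> A) \<and>
     (\<forall>T\<in>A. \<exists>S\<in>A. is_adjoint T S) \<and>
     (\<forall>T s. bounded_op T \<and> (\<forall>n. s n \<in> A) \<and>
            (\<lambda>n. op_norm (op_diff (s n) T)) \<longlonglongrightarrow> 0 \<longrightarrow> T \<in> A)"

definition partial_translation :: "'a::metric_space set \<Rightarrow> ('a \<Rightarrow> 'a) \<Rightarrow> bool" where
  "partial_translation D f \<longleftrightarrow> inj_on f D \<and> (\<exists>R. \<forall>x\<in>D. dist x (f x) \<le> R)"

text \<open>v_f: the bounded operator with v_f delta_x = delta_(f x) for x in D, 0 otherwise.\<close>
definition pt_op :: "'a set \<Rightarrow> ('a \<Rightarrow> 'a) \<Rightarrow> 'a op" where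
  "pt_op D f = (\<lambda>g. if g \<in> ell2 then (\<lambda>y. if y \<in> f ` D then g (inv_into D f y) else 0)
                   else (\<lambda>_. 0))"

definition uniform_roe :: "'a::metric_space op set" where
  "uniform_roe = \<Inter>{A. cstar_subalg A \<and>
                       {pt_op D f | D f. partial_translation D f} \<subseteq> A}"

definition star_automorphism :: "'a op set \<Rightarrow> ('a op \<Rightarrow> 'a op) \<Rightarrow> bool" where
  "star_automorphism A \<phi> \<longleftrightarrow>
     bij_betw \<phi> A A \<and>
     (\<forall>S\<in>A. \<forall>T\<in>A. \<phi> (op_add S T) = op_add (\<phi> S) (\<phi> T)) \<and>
     (\<forall>c. \<forall>T\<in>A. \<phi> (op_scale c T) = op_scale c (\<phi> T)) \<and>
     (\<forall>S\<in>A. \<forall>T\<in>A. \<phi> (op_mult S T) = op_mult (\<phi> S) (\<phi> T)) \<and>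
     (\<forall>S\<in>A. \<forall>T\<in>A. is_adjoint T S \<longrightarrow> is_adjoint (\<phi> T) (\<phi> S))"

definition is_flow :: "'a op set \<Rightarrow> (real \<Rightarrow> 'a op \<Rightarrow> 'a op) \<Rightarrow> bool" where
  "is_flow A \<sigma> \<longleftrightarrow>
     (\<forall>t. star_automorphism A (\<sigma> t)) \<and>
     (\<forall>T\<in>A. \<sigma> 0 T = T) \<and>
     (\<forall>s t. \<forall>T\<in>A. \<sigma> (s + t) T = \<sigma> s (\<sigma> t T)) \<and>
     (\<forall>T\<in>A. \<forall>t0. ((\<lambda>t. op_norm (op_diff (\<sigma> t T) (\<sigma> t0 T))) \<longlongrightarrow> 0) (at t0))"

definition norm_differentiable_at :: "(real \<Rightarrow> 'a op) \<Rightarrow> real \<Rightarrow> bool" where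
  "norm_differentiable_at u t0 \<longleftrightarrow>
     (\<exists>D. bounded_op D \<and>
        ((\<lambda>h. op_norm (op_diff (op_scale (complex_of_real (1 / h)) (op_diff (u (t0 + h)) (u t0))) D))
           \<longlongrightarrow> 0) (at 0))"

definition coarse_flow :: "'a::metric_space op set \<Rightarrow> (real \<Rightarrow> 'a op \<Rightarrow> 'a op) \<Rightarrow> bool" where
  "coarse_flow A \<sigma> \<longleftrightarrow> is_flow A \<sigma> \<and>
     (\<forall>D f. partial_translation D f \<longrightarrow>
        (\<forall>t. norm_differentiable_at (\<lambda>t. \<sigma> t (pt_op D f)) t))"

definition uniformly_locally_finite :: "'a::metric_space itself \<Rightarrow> bool" where
  "uniformly_locally_finite _ \<longleftrightarrow>
     (\<forall>r>0. \<exists>N::nat. \<forall>x::'a. finite (cball x r) \<and> card (cball x r) \<le> N)"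

end

theory Submission
  imports Defs "HOL-Analysis.Analysis"
begin


definition nsq :: "('a \<Rightarrow> complex) \<Rightarrow> real" where
  "nsq g = infsum (\<lambda>x. (cmod (g x))\<^sup>2) UNIV"

lemma l2norm_nsq: "l2norm g = sqrt (nsq g)"
  by (simp add: l2norm_def nsq_def)

lemma nsq_nonneg: "0 \<le> nsq g"
  unfolding nsq_def by (rule infsum_nonneg) simp

lemma l2norm_nonneg: "0 \<le> l2norm g"
  by (simp add: l2norm_nsq nsq_nonneg)

lemma l2norm_sq: "(l2norm g)\<^sup>2 = nsq g"
  by (simp add: l2norm_nsq nsq_nonneg)

lemma finite_le_nsq:
  assumes "g \<in> ell2" "finite F"
  shows "(\<Sum>x\<in>F. (cmod (g x))\<^sup>2) \<le> nsq g"
  unfolding nsq_def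
  by (rule finite_sum_le_infsum) (use assms in \<open>auto simp: ell2_def\<close>)

lemma ell2_I:
  assumes "\<And>F. finite F \<Longrightarrow> (\<Sum>x\<in>F. (cmod (g x))\<^sup>2) \<le> B"
  shows "g \<in> ell2 \<and> nsq g \<le> B"
proof -
  have bdd: "bdd_above (sum (\<lambda>x. (cmod (g x))\<^sup>2) ` {F. F \<subseteq> UNIV \<and> finite F})"
    using assms by (auto intro!: bdd_aboveI2)
  have s: "(\<lambda>x. (cmod (g x))\<^sup>2) summable_on UNIV"
    by (rule nonneg_bdd_above_summable_on) (use bdd in auto)
  have "nsq g = (SUP F\<in>{F. finite F \<and> F\<subseteq>UNIV}. sum (\<lambda>x. (cmod (g x))\<^sup>2) F)"
    unfolding nsq_def by (rule nonneg_bdd_above_infsum) (use bdd in auto)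
  also have "\<dots> \<le> B"
    by (rule cSUP_least) (use assms in auto)
  finally show ?thesis using s by (simp add: ell2_def)
qed

lemma ell2_I':
  assumes "\<And>F. finite F \<Longrightarrow> sqrt (\<Sum>x\<in>F. (cmod (g x))\<^sup>2) \<le> B"
  shows "g \<in> ell2 \<and> l2norm g \<le> B"
proof -
  have B: "0 \<le> B" using assms[of "{}"] by simp
  have "\<And>F. finite F \<Longrightarrow> (\<Sum>x\<in>F. (cmod (g x))\<^sup>2) \<le> B\<^sup>2"
    using assms by (metis real_le_rsqrt sum_nonneg zero_le_power2 real_sqrt_le_iff real_sqrt_pow2 power2_le_iff_abs_le B sqrt_le_D)
  from ell2_I[of g, OF this] have "g \<in> ell2 \<and> nsq g \<le> B\<^sup>2" by blast
  then show ?thesis using B by (simp add: l2norm_nsq real_sqrt_le_iff real_le_lsqrt nsq_nonneg)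
qed

lemma finite_le_l2norm:
  assumes "g \<in> ell2" "finite F"
  shows "sqrt (\<Sum>x\<in>F. (cmod (g x))\<^sup>2) \<le> l2norm g"
  using finite_le_nsq[OF assms] by (simp add: l2norm_nsq)

lemma L2_set_eq: "L2_set (\<lambda>x. cmod (g x)) F = sqrt (\<Sum>x\<in>F. (cmod (g x))\<^sup>2)"
  by (simp add: L2_set_def)

lemma ell2_lincomb:
  assumes "g \<in> ell2" "h \<in> ell2"
  shows "(\<lambda>x. a * g x + b * h x) \<in> ell2 \<and>
         l2norm (\<lambda>x. a * g x + b * h x) \<le> cmod a * l2norm g + cmod b * l2norm h"
proof (rule ell2_I')
  fix F :: "'a set" assume F: "finite F"
  have "sqrt (\<Sum>x\<in>F. (cmod (a * g x + b * h x))\<^sup>2) = L2_set (\<lambda>x. cmod (a * g x + b * h x)) F"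
    by (simp add: L2_set_def)
  also have "\<dots> \<le> L2_set (\<lambda>x. cmod a * cmod (g x) + cmod b * cmod (h x)) F"
    by (rule L2_set_mono) (auto intro: order_trans[OF norm_triangle_ineq] simp: norm_mult)
  also have "\<dots> \<le> L2_set (\<lambda>x. cmod a * cmod (g x)) F + L2_set (\<lambda>x. cmod b * cmod (h x)) F"
    by (rule L2_set_triangle_ineq)
  also have "\<dots> = cmod a * L2_set (\<lambda>x. cmod (g x)) F + cmod b * L2_set (\<lambda>x. cmod (h x)) F"
    by (simp add: L2_set_right_distrib)
  also have "\<dots> \<le> cmod a * l2norm g + cmod b * l2norm h"
    using finite_le_l2norm[OF assms(1) F] finite_le_l2norm[OF assms(2) F]
    by (intro add_mono mult_left_mono) (auto simp: L2_set_def)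
  finally show "sqrt (\<Sum>x\<in>F. (cmod (a * g x + b * h x))\<^sup>2) \<le> cmod a * l2norm g + cmod b * l2norm h" .
qed

lemma ell2_zero[simp]: "(\<lambda>x. 0) \<in> ell2"
  by (simp add: ell2_def)

lemma l2norm_zero[simp]: "l2norm (\<lambda>x. 0) = 0"
  by (simp add: l2norm_def)

lemma ell2_add: "g \<in> ell2 \<Longrightarrow> h \<in> ell2 \<Longrightarrow> (\<lambda>x. g x + h x) \<in> ell2"
  using ell2_lincomb[of g h 1 1] by simp

lemma ell2_diff: "g \<in> ell2 \<Longrightarrow> h \<in> ell2 \<Longrightarrow> (\<lambda>x. g x - h x) \<in> ell2"
  using ell2_lincomb[of g h 1 "-1"] by simp

lemma ell2_scale: "g \<in> ell2 \<Longrightarrow> (\<lambda>x. c * g x) \<in> ell2"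
  using ell2_lincomb[of g g c 0] by simp

lemma ell2_lc: "g \<in> ell2 \<Longrightarrow> h \<in> ell2 \<Longrightarrow> (\<lambda>x. g x + c * h x) \<in> ell2"
  using ell2_lincomb[of g h 1 c] by simp

lemma l2norm_add: "g \<in> ell2 \<Longrightarrow> h \<in> ell2 \<Longrightarrow> l2norm (\<lambda>x. g x + h x) \<le> l2norm g + l2norm h"
  using ell2_lincomb[of g h 1 1] by simp

lemma l2norm_diff: "g \<in> ell2 \<Longrightarrow> h \<in> ell2 \<Longrightarrow> l2norm (\<lambda>x. g x - h x) \<le> l2norm g + l2norm h"
  using ell2_lincomb[of g h 1 "-1"] by simp

lemma nsq_scale: "nsq (\<lambda>x. c * g x) = (cmod c)\<^sup>2 * nsq g"
  unfolding nsq_def by (simp add: norm_mult power_mult_distrib infsum_cmult_right')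

lemma l2norm_scale: "l2norm (\<lambda>x. c * g x) = cmod c * l2norm g"
  by (simp add: l2norm_nsq nsq_scale real_sqrt_mult)

lemma l2norm_minus_sym: "l2norm (\<lambda>x. g x - h x) = l2norm (\<lambda>x. h x - g x)"
  unfolding l2norm_def by (simp add: norm_minus_commute)

lemma ell2_summable: "g \<in> ell2 \<Longrightarrow> ((\<lambda>x. (cmod (g x))\<^sup>2) has_sum nsq g) UNIV"
  by (simp add: ell2_def nsq_def)

lemma nsq_eq_0: assumes "g \<in> ell2" "nsq g = 0" shows "g = (\<lambda>x. 0)"
proof
  fix x
  have "(\<Sum>y\<in>{x}. (cmod (g y))\<^sup>2) \<le> 0" using finite_le_nsq[OF assms(1), of "{x}"] assms(2) by simp
  then show "g x = 0" by simp
qed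

lemma l2norm_eq_0: "g \<in> ell2 \<Longrightarrow> l2norm g = 0 \<Longrightarrow> g = (\<lambda>x. 0)"
  using nsq_eq_0 by (simp add: l2norm_nsq)

lemma coord_le_l2norm: "g \<in> ell2 \<Longrightarrow> cmod (g x) \<le> l2norm g"
  using finite_le_l2norm[of g "{x}"] by simp


lemma inner_abs_summable:
  assumes "g \<in> ell2" "h \<in> ell2"
  shows "(\<lambda>x. norm (cnj (g x) * h x)) summable_on UNIV"
proof -
  define F where "F = (\<lambda>x. ((cmod (g x))\<^sup>2 + (cmod (h x))\<^sup>2) * (1/2::real))"
  have s: "F summable_on UNIV"
    using assms unfolding ell2_def F_def
    by (intro summable_on_cmult_left summable_on_add) auto
  have e: "(\<lambda>x. norm (F x)) = F"
    by (rule ext) (simp add: F_def)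
  have "(\<lambda>x. norm (F x)) summable_on UNIV"
    using s e by simp
  then show ?thesis
  proof (rule Infinite_Sum.abs_summable_on_comparison_test)
    fix x
    have "2 * cmod (g x) * cmod (h x) \<le> (cmod (g x))\<^sup>2 + (cmod (h x))\<^sup>2"
      by (rule sum_squares_bound)
    then have "cmod (g x) * cmod (h x) \<le> F x" unfolding F_def by (simp add: field_simps)
    moreover have "norm (cnj (g x) * h x) = cmod (g x) * cmod (h x)" by (simp add: norm_mult)
    moreover have "norm (F x) = F x" unfolding F_def by simp
    ultimately show "norm (cnj (g x) * h x) \<le> norm (F x)" by simp
  qed
qed

lemma inner_summable:
  assumes "g \<in> ell2" "h \<in> ell2"
  shows "(\<lambda>x. cnj (g x) * h x) summable_on UNIV"
  by (rule abs_summable_summable) (use inner_abs_summable[OF assms] in simp)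

lemma inner_has_sum:
  assumes "g \<in> ell2" "h \<in> ell2"
  shows "((\<lambda>x. cnj (g x) * h x) has_sum l2inner g h) UNIV"
  using inner_summable[OF assms] by (simp add: l2inner_def)

lemma cauchy_schwarz:
  assumes "g \<in> ell2" "h \<in> ell2"
  shows "cmod (l2inner g h) \<le> l2norm g * l2norm h"
proof -
  have "cmod (l2inner g h) \<le> infsum (\<lambda>x. norm (cnj (g x) * h x)) UNIV"
    unfolding l2inner_def by (rule norm_infsum_bound) (rule inner_abs_summable[OF assms])
  also have "\<dots> \<le> l2norm g * l2norm h"
  proof (rule infsum_le_finite_sums)
    show "(\<lambda>x. norm (cnj (g x) * h x)) summable_on UNIV"
      using inner_abs_summable[OF assms] by simp
  next
    fix F :: "'a set" assume F: "finite F" "F \<subseteq> UNIV"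
    have "(\<Sum>x\<in>F. norm (cnj (g x) * h x)) = (\<Sum>x\<in>F. \<bar>cmod (g x)\<bar> * \<bar>cmod (h x)\<bar>)"
      by (simp add: norm_mult)
    also have "\<dots> \<le> L2_set (\<lambda>x. cmod (g x)) F * L2_set (\<lambda>x. cmod (h x)) F"
      by (rule L2_set_mult_ineq)
    also have "\<dots> \<le> l2norm g * l2norm h"
      using finite_le_l2norm[OF assms(1) F(1)] finite_le_l2norm[OF assms(2) F(1)]
      by (intro mult_mono) (auto simp: L2_set_def l2norm_nonneg sum_nonneg)
    finally show "(\<Sum>x\<in>F. norm (cnj (g x) * h x)) \<le> l2norm g * l2norm h" .
  qed
  finally show ?thesis .
qed

lemma l2inner_self: "g \<in> ell2 \<Longrightarrow> l2inner g g = complex_of_real (nsq g)"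
proof -
  assume g: "g \<in> ell2"
  have "((\<lambda>x. complex_of_real ((cmod (g x))\<^sup>2)) has_sum complex_of_real (nsq g)) UNIV"
    by (rule has_sum_bounded_linear[OF bounded_linear_of_real ell2_summable[OF g]])
  moreover have "\<And>x. complex_of_real ((cmod (g x))\<^sup>2) = cnj (g x) * g x"
    by (metis complex_norm_square mult.commute of_real_power)
  ultimately have "((\<lambda>x. cnj (g x) * g x) has_sum complex_of_real (nsq g)) UNIV" by simp
  then show ?thesis using inner_has_sum[OF g g] has_sum_unique by blast
qed

lemma l2inner_lin2:
  assumes "g \<in> ell2" "h1 \<in> ell2" "h2 \<in> ell2"
  shows "l2inner g (\<lambda>x. h1 x + c * h2 x) = l2inner g h1 + c * l2inner g h2"
proof -
  have "((\<lambda>x. cnj (g x) * h1 x + c * (cnj (g x) * h2 x)) has_sum (l2inner g h1 + c * l2inner g h2)) UNIV"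
    by (intro has_sum_add has_sum_cmult_right inner_has_sum assms)
  moreover have "(\<lambda>x. cnj (g x) * h1 x + c * (cnj (g x) * h2 x)) = (\<lambda>x. cnj (g x) * (h1 x + c * h2 x))"
    by (auto simp: algebra_simps)
  ultimately show ?thesis using inner_has_sum[OF assms(1) ell2_lc[OF assms(2,3)]] has_sum_unique by metis
qed

lemma l2inner_lin1:
  assumes "g1 \<in> ell2" "g2 \<in> ell2" "h \<in> ell2"
  shows "l2inner (\<lambda>x. g1 x + c * g2 x) h = l2inner g1 h + cnj c * l2inner g2 h"
proof -
  have "((\<lambda>x. cnj (g1 x) * h x + cnj c * (cnj (g2 x) * h x)) has_sum (l2inner g1 h + cnj c * l2inner g2 h)) UNIV"
    by (intro has_sum_add has_sum_cmult_right inner_has_sum assms)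
  moreover have "(\<lambda>x. cnj (g1 x) * h x + cnj c * (cnj (g2 x) * h x)) = (\<lambda>x. cnj (g1 x + c * g2 x) * h x)"
    by (auto simp: algebra_simps)
  ultimately show ?thesis using inner_has_sum[OF ell2_lc[OF assms(1,2)] assms(3)] has_sum_unique by metis
qed

lemma l2inner_cnj:
  assumes "g \<in> ell2" "h \<in> ell2"
  shows "l2inner h g = cnj (l2inner g h)"
proof -
  have "((\<lambda>x. cnj (cnj (g x) * h x)) has_sum cnj (l2inner g h)) UNIV"
    by (rule has_sum_bounded_linear[OF bounded_linear_cnj inner_has_sum[OF assms]])
  then have "((\<lambda>x. cnj (h x) * g x) has_sum cnj (l2inner g h)) UNIV"
    by (simp add: mult.commute)
  then show ?thesis using inner_has_sum[OF assms(2,1)] has_sum_unique by blast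
qed

lemma l2inner_zero1[simp]: "l2inner (\<lambda>x. 0) h = 0"
  by (simp add: l2inner_def)

lemma l2inner_zero2[simp]: "l2inner g (\<lambda>x. 0) = 0"
  by (simp add: l2inner_def)

definition delta :: "'a \<Rightarrow> 'a \<Rightarrow> complex" where
  "delta y = (\<lambda>x. if x = y then 1 else 0)"

lemma ell2_delta[simp]: "delta y \<in> ell2"
proof -
  have "delta y \<in> ell2 \<and> l2norm (delta y) \<le> 1"
  proof (rule ell2_I')
    fix F :: "'a set" assume "finite F"
    have e: "(\<lambda>x. (cmod (delta y x))\<^sup>2) = (\<lambda>x. if x = y then 1 else 0)"
      by (auto simp: delta_def)
    show "sqrt (\<Sum>x\<in>F. (cmod (delta y x))\<^sup>2) \<le> 1"
      using \<open>finite F\<close> unfolding e by (cases "y \<in> F") (simp_all add: sum.delta)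
  qed
  then show ?thesis by simp
qed

lemma l2norm_delta[simp]: "l2norm (delta y) = 1"
proof -
  have "((\<lambda>x. (cmod (delta y x))\<^sup>2) has_sum 1) UNIV"
    by (rule has_sum_finite_neutralI[of "{y}"]) (auto simp: delta_def)
  then show ?thesis unfolding l2norm_def by (simp add: infsumI)
qed

lemma l2inner_delta1: "l2inner (delta y) h = h y"
proof -
  have "((\<lambda>x. cnj (delta y x) * h x) has_sum h y) UNIV"
    by (rule has_sum_finite_neutralI[of "{y}"]) (auto simp: delta_def)
  then show ?thesis unfolding l2inner_def by (simp add: infsumI)
qed

lemma l2inner_delta2: "l2inner h (delta y) = cnj (h y)"
proof -
  have "((\<lambda>x. cnj (h x) * delta y x) has_sum cnj (h y)) UNIV"
    by (rule has_sum_finite_neutralI[of "{y}"]) (auto simp: delta_def)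
  then show ?thesis unfolding l2inner_def by (simp add: infsumI)
qed

lemma nsq_tail:
  assumes g: "g \<in> ell2" and F: "finite F"
  shows "nsq (\<lambda>x. if x \<in> F then 0 else g x) = nsq g - (\<Sum>x\<in>F. (cmod (g x))\<^sup>2)"
proof -
  have a: "((\<lambda>x. if x \<in> F then (cmod (g x))\<^sup>2 else 0) has_sum (\<Sum>x\<in>F. (cmod (g x))\<^sup>2)) UNIV"
    by (rule has_sum_finite_neutralI[of F]) (use F in auto)
  have "((\<lambda>x. (cmod (g x))\<^sup>2 + - (if x \<in> F then (cmod (g x))\<^sup>2 else 0)) has_sum (nsq g + - (\<Sum>x\<in>F. (cmod (g x))\<^sup>2))) UNIV"
    by (intro has_sum_add ell2_summable g has_sum_uminusI a)
  moreover have "(\<lambda>x. (cmod (g x))\<^sup>2 + - (if x \<in> F then (cmod (g x))\<^sup>2 else 0)) = (\<lambda>x. (cmod (if x \<in> F then 0 else g x))\<^sup>2)"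
    by auto
  ultimately show ?thesis unfolding nsq_def by (simp add: infsumI)
qed

lemma ell2_restrict: "g \<in> ell2 \<Longrightarrow> (\<lambda>x. if x \<in> F then 0 else g x) \<in> ell2"
proof -
  assume g: "g \<in> ell2"
  have "(\<lambda>x. if x \<in> F then 0 else g x) \<in> ell2 \<and> nsq (\<lambda>x. if x \<in> F then 0 else g x) \<le> nsq g"
    by (rule ell2_I) (auto intro: order_trans[OF sum_mono finite_le_nsq[OF g]])
  then show ?thesis by blast
qed

lemma ell2_restrict2: "g \<in> ell2 \<Longrightarrow> (\<lambda>x. if x \<in> F then g x else 0) \<in> ell2"
proof -
  assume g: "g \<in> ell2"
  have "(\<lambda>x. if x \<in> F then g x else 0) \<in> ell2 \<and> nsq (\<lambda>x. if x \<in> F then g x else 0) \<le> nsq g"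
    by (rule ell2_I) (auto intro: order_trans[OF sum_mono finite_le_nsq[OF g]])
  then show ?thesis by blast
qed

lemma tail_tendsto:
  assumes g: "g \<in> ell2"
  shows "((\<lambda>F. l2norm (\<lambda>x. g x - (if x \<in> F then g x else 0))) \<longlongrightarrow> 0) (finite_subsets_at_top UNIV)"
proof -
  have "((\<lambda>F. sum (\<lambda>x. (cmod (g x))\<^sup>2) F) \<longlongrightarrow> nsq g) (finite_subsets_at_top UNIV)"
    using ell2_summable[OF g] by (simp add: has_sum_def)
  then have "((\<lambda>F. nsq g - sum (\<lambda>x. (cmod (g x))\<^sup>2) F) \<longlongrightarrow> nsq g - nsq g) (finite_subsets_at_top UNIV)"
    by (intro tendsto_diff tendsto_const)
  then have "((\<lambda>F. sqrt (nsq g - sum (\<lambda>x. (cmod (g x))\<^sup>2) F)) \<longlongrightarrow> sqrt 0) (finite_subsets_at_top UNIV)"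
    by (intro tendsto_real_sqrt) simp
  moreover have "\<forall>\<^sub>F F in finite_subsets_at_top UNIV. sqrt (nsq g - sum (\<lambda>x. (cmod (g x))\<^sup>2) F) = l2norm (\<lambda>x. g x - (if x \<in> F then g x else 0))"
  proof -
    have "\<And>F. finite F \<Longrightarrow> sqrt (nsq g - sum (\<lambda>x. (cmod (g x))\<^sup>2) F) = l2norm (\<lambda>x. g x - (if x \<in> F then g x else 0))"
    proof -
      fix F :: "'a set" assume F: "finite F"
      have "(\<lambda>x. g x - (if x \<in> F then g x else 0)) = (\<lambda>x. if x \<in> F then 0 else g x)" by auto
      then show "sqrt (nsq g - sum (\<lambda>x. (cmod (g x))\<^sup>2) F) = l2norm (\<lambda>x. g x - (if x \<in> F then g x else 0))"
        using nsq_tail[OF g F] by (simp add: l2norm_nsq)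
    qed
    then show ?thesis by (simp add: eventually_finite_subsets_at_top_weakI)
  qed
  ultimately show ?thesis by (simp add: tendsto_cong)
qed


section \<open>Bounded operators\<close>

lemma bop_ell2: "bounded_op T \<Longrightarrow> T g \<in> ell2"
  unfolding bounded_op_def by (cases "g \<in> ell2") auto

lemma bop_out: "bounded_op T \<Longrightarrow> g \<notin> ell2 \<Longrightarrow> T g = (\<lambda>x. 0)"
  unfolding bounded_op_def by auto

lemma bop_lin: "bounded_op T \<Longrightarrow> g \<in> ell2 \<Longrightarrow> h \<in> ell2 \<Longrightarrow>
  T (\<lambda>x. g x + c * h x) = (\<lambda>x. T g x + c * T h x)"
  unfolding bounded_op_def by blast

lemma bop_zero: assumes "bounded_op T" shows "T (\<lambda>x. 0) = (\<lambda>x. 0)"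
proof -
  have "T (\<lambda>x. 0 + 1 * 0) = (\<lambda>x. T (\<lambda>x. 0) x + 1 * T (\<lambda>x. 0) x)"
    by (rule bop_lin[OF assms]) auto
  then have "\<And>x. T (\<lambda>x. 0) x = T (\<lambda>x. 0) x + T (\<lambda>x. 0) x" by (simp add: fun_eq_iff)
  then show ?thesis by (simp add: fun_eq_iff)
qed

lemma bop_scale: assumes "bounded_op T" "g \<in> ell2" shows "T (\<lambda>x. c * g x) = (\<lambda>x. c * T g x)"
  using bop_lin[OF assms(1) ell2_zero assms(2), of c] bop_zero[OF assms(1)] by simp

lemma bop_add: assumes "bounded_op T" "g \<in> ell2" "h \<in> ell2"
  shows "T (\<lambda>x. g x + h x) = (\<lambda>x. T g x + T h x)"
  using bop_lin[OF assms, of 1] by simp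

lemma bop_diff: assumes "bounded_op T" "g \<in> ell2" "h \<in> ell2"
  shows "T (\<lambda>x. g x - h x) = (\<lambda>x. T g x - T h x)"
  using bop_lin[OF assms, of "-1"] by simp

definition opset :: "'a op \<Rightarrow> real set" where
  "opset T = {l2norm (T g) | g. g \<in> ell2 \<and> l2norm g \<le> 1}"

lemma op_norm_opset: "op_norm T = Sup (opset T)"
  by (simp add: op_norm_def opset_def)

lemma opset_bdd: assumes "bounded_op T" shows "bdd_above (opset T)"
proof -
  obtain K where K: "\<forall>g\<in>ell2. l2norm (T g) \<le> K * l2norm g"
    using assms unfolding bounded_op_def by blast
  show ?thesis unfolding opset_def
  proof (rule bdd_aboveI, safe)
    fix g :: "'a \<Rightarrow> complex" assume g1: "g \<in> ell2" and g2: "l2norm g \<le> 1"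
    have g: "g \<in> ell2 \<and> l2norm g \<le> 1" using g1 g2 by blast
    have "l2norm (T g) \<le> K * l2norm g" using K g by blast
    also have "\<dots> \<le> \<bar>K\<bar> * l2norm g" by (intro mult_right_mono) (auto simp: l2norm_nonneg)
    also have "\<dots> \<le> \<bar>K\<bar>" using g by (simp add: mult_left_le)
    finally show "l2norm (T g) \<le> \<bar>K\<bar>" .
  qed
qed

lemma opset_ne: "opset T \<noteq> {}"
  unfolding opset_def by (auto intro!: exI[of _ "\<lambda>x. 0"])

lemma op_norm_nonneg: assumes "bounded_op T" shows "0 \<le> op_norm T"
proof -
  have "l2norm (T (\<lambda>x. 0)) \<in> opset T" unfolding opset_def by force
  then have "l2norm (T (\<lambda>x. 0)) \<le> op_norm T"
    unfolding op_norm_opset by (rule cSup_upper) (rule opset_bdd[OF assms])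
  then show ?thesis using l2norm_nonneg order_trans by blast
qed

lemma bop_bound: assumes T: "bounded_op T" and g: "g \<in> ell2"
  shows "l2norm (T g) \<le> op_norm T * l2norm g"
proof (cases "l2norm g = 0")
  case True
  then have "g = (\<lambda>x. 0)" using l2norm_eq_0 g by blast
  then show ?thesis using bop_zero[OF T] by simp
next
  case False
  define n where "n = l2norm g"
  have n: "n > 0" using False l2norm_nonneg[of g] by (simp add: n_def)
  define g' where "g' = (\<lambda>x. complex_of_real (1/n) * g x)"
  have g'1: "g' \<in> ell2" unfolding g'_def by (rule ell2_scale[OF g])
  have "l2norm g' = cmod (complex_of_real (1/n)) * n" unfolding g'_def l2norm_scale n_def ..
  then have g'2: "l2norm g' = 1" using n by (simp add: norm_divide)
  note g' = g'1 g'2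
  have "l2norm (T g') \<in> opset T" unfolding opset_def using g' by force
  then have "l2norm (T g') \<le> op_norm T"
    unfolding op_norm_opset by (rule cSup_upper) (rule opset_bdd[OF T])
  moreover have "l2norm (T g') = l2norm (T g) / n"
  proof -
    have "T g' = (\<lambda>x. complex_of_real (1/n) * T g x)" unfolding g'_def by (rule bop_scale[OF T g])
    then have "l2norm (T g') = cmod (complex_of_real (1/n)) * l2norm (T g)" by (simp only: l2norm_scale)
    then show ?thesis using n by (simp add: norm_divide)
  qed
  ultimately show ?thesis using n by (simp add: n_def field_simps)
qed

lemma op_norm_le:
  assumes "0 \<le> K" "\<And>g. g \<in> ell2 \<Longrightarrow> l2norm (T g) \<le> K * l2norm g"
  shows "op_norm T \<le> K"
  unfolding op_norm_opset
proof (rule cSup_least[OF opset_ne])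
  fix x assume "x \<in> opset T"
  then obtain g where g: "g \<in> ell2" "l2norm g \<le> 1" "x = l2norm (T g)" unfolding opset_def by blast
  have "l2norm (T g) \<le> K * l2norm g" using assms g by blast
  also have "\<dots> \<le> K" using g assms by (simp add: mult_left_le)
  finally show "x \<le> K" using g by simp
qed

lemma bounded_opI:
  assumes "\<And>g. g \<in> ell2 \<Longrightarrow> T g \<in> ell2"
    and "\<And>g h c. g \<in> ell2 \<Longrightarrow> h \<in> ell2 \<Longrightarrow> T (\<lambda>x. g x + c * h x) = (\<lambda>x. T g x + c * T h x)"
    and "\<And>g. g \<in> ell2 \<Longrightarrow> l2norm (T g) \<le> K * l2norm g"
    and "\<And>g. g \<notin> ell2 \<Longrightarrow> T g = (\<lambda>_. 0)"
  shows "bounded_op T"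
  unfolding bounded_op_def using assms by blast

lemma bounded_op_zero[simp]: "bounded_op op_zero"
  by (rule bounded_opI[where K=0]) (auto simp: op_zero_def)

lemma op_norm_zero[simp]: "op_norm (op_zero :: 'a op) = 0"
proof -
  have a: "op_norm (op_zero :: 'a op) \<le> 0" by (rule op_norm_le) (auto simp: op_zero_def)
  have b: "0 \<le> op_norm (op_zero :: 'a op)" by (rule op_norm_nonneg) simp
  show ?thesis using a b by linarith
qed

lemma bounded_op_add:
  assumes S: "bounded_op S" and T: "bounded_op T"
  shows "bounded_op (op_add S T)" "op_norm (op_add S T) \<le> op_norm S + op_norm T"
proof -
  have b: "l2norm (op_add S T g) \<le> (op_norm S + op_norm T) * l2norm g" if g: "g \<in> ell2" for g
  proof -
    have "l2norm (op_add S T g) \<le> l2norm (S g) + l2norm (T g)"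
      unfolding op_add_def by (rule l2norm_add) (auto intro: bop_ell2 S T)
    also have "\<dots> \<le> op_norm S * l2norm g + op_norm T * l2norm g"
      by (intro add_mono bop_bound S T g)
    finally show ?thesis by (simp add: algebra_simps)
  qed
  show "bounded_op (op_add S T)"
  proof (rule bounded_opI[where K="op_norm S + op_norm T"])
    fix g h :: "'a \<Rightarrow> complex" and c assume g: "g \<in> ell2" and h: "h \<in> ell2"
    show "op_add S T (\<lambda>x. g x + c * h x) = (\<lambda>x. op_add S T g x + c * op_add S T h x)"
      using bop_lin[OF S g h, of c] bop_lin[OF T g h, of c] by (simp add: op_add_def algebra_simps)
  qed (use S T b in \<open>auto simp: op_add_def bop_out intro!: ell2_add bop_ell2[OF S] bop_ell2[OF T]\<close>)
  show "op_norm (op_add S T) \<le> op_norm S + op_norm T"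
    using b op_norm_nonneg[OF S] op_norm_nonneg[OF T] by (intro op_norm_le) auto
qed

lemma bounded_op_diff:
  assumes S: "bounded_op S" and T: "bounded_op T"
  shows "bounded_op (op_diff S T)" "op_norm (op_diff S T) \<le> op_norm S + op_norm T"
proof -
  have b: "l2norm (op_diff S T g) \<le> (op_norm S + op_norm T) * l2norm g" if g: "g \<in> ell2" for g
  proof -
    have "l2norm (op_diff S T g) \<le> l2norm (S g) + l2norm (T g)"
      unfolding op_diff_def by (rule l2norm_diff) (auto intro: bop_ell2 S T)
    also have "\<dots> \<le> op_norm S * l2norm g + op_norm T * l2norm g"
      by (intro add_mono bop_bound S T g)
    finally show ?thesis by (simp add: algebra_simps)
  qed
  show "bounded_op (op_diff S T)"
  proof (rule bounded_opI[where K="op_norm S + op_norm T"])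
    fix g h :: "'a \<Rightarrow> complex" and c assume g: "g \<in> ell2" and h: "h \<in> ell2"
    show "op_diff S T (\<lambda>x. g x + c * h x) = (\<lambda>x. op_diff S T g x + c * op_diff S T h x)"
      using bop_lin[OF S g h, of c] bop_lin[OF T g h, of c] by (simp add: op_diff_def algebra_simps)
  qed (use S T b in \<open>auto simp: op_diff_def bop_out intro!: ell2_diff bop_ell2[OF S] bop_ell2[OF T]\<close>)
  show "op_norm (op_diff S T) \<le> op_norm S + op_norm T"
    using b op_norm_nonneg[OF S] op_norm_nonneg[OF T] by (intro op_norm_le) auto
qed

lemma bounded_op_scale:
  assumes T: "bounded_op T"
  shows "bounded_op (op_scale c T)" "op_norm (op_scale c T) \<le> cmod c * op_norm T"
proof -
  have b: "l2norm (op_scale c T g) \<le> (cmod c * op_norm T) * l2norm g" if g: "g \<in> ell2" for g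
    using bop_bound[OF T g] by (simp add: op_scale_def l2norm_scale mult.assoc mult_left_mono)
  show "bounded_op (op_scale c T)"
  proof (rule bounded_opI[where K="cmod c * op_norm T"])
    fix g h :: "'a \<Rightarrow> complex" and d assume g: "g \<in> ell2" and h: "h \<in> ell2"
    show "op_scale c T (\<lambda>x. g x + d * h x) = (\<lambda>x. op_scale c T g x + d * op_scale c T h x)"
      using bop_lin[OF T g h, of d] by (simp add: op_scale_def algebra_simps)
  qed (use T b in \<open>auto simp: op_scale_def bop_out intro!: ell2_scale bop_ell2[OF T]\<close>)
  show "op_norm (op_scale c T) \<le> cmod c * op_norm T"
    using b op_norm_nonneg[OF T] by (intro op_norm_le) auto
qed

lemma bounded_op_mult:
  assumes S: "bounded_op S" and T: "bounded_op T"
  shows "bounded_op (op_mult S T)" "op_norm (op_mult S T) \<le> op_norm S * op_norm T"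
proof -
  have b: "l2norm (op_mult S T g) \<le> (op_norm S * op_norm T) * l2norm g" if g: "g \<in> ell2" for g
  proof -
    have "l2norm (S (T g)) \<le> op_norm S * l2norm (T g)" by (rule bop_bound[OF S bop_ell2[OF T]])
    also have "\<dots> \<le> op_norm S * (op_norm T * l2norm g)"
      by (rule mult_left_mono[OF bop_bound[OF T g] op_norm_nonneg[OF S]])
    finally show ?thesis by (simp add: op_mult_def mult.assoc)
  qed
  show "bounded_op (op_mult S T)"
  proof (rule bounded_opI[where K="op_norm S * op_norm T"])
    fix g h :: "'a \<Rightarrow> complex" and c assume g: "g \<in> ell2" and h: "h \<in> ell2"
    show "op_mult S T (\<lambda>x. g x + c * h x) = (\<lambda>x. op_mult S T g x + c * op_mult S T h x)"
      using bop_lin[OF T g h, of c] bop_lin[OF S bop_ell2[OF T, of g] bop_ell2[OF T, of h], of c]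
      by (simp add: op_mult_def)
  qed (use S T b in \<open>auto simp: op_mult_def bop_out bop_zero[OF S] intro!: bop_ell2[OF S]\<close>)
  show "op_norm (op_mult S T) \<le> op_norm S * op_norm T"
    using b op_norm_nonneg[OF S] op_norm_nonneg[OF T] by (intro op_norm_le) auto
qed

lemma op_norm_diff_sym:
  assumes "bounded_op S" "bounded_op T"
  shows "op_norm (op_diff S T) = op_norm (op_diff T S)"
proof -
  have "op_diff T S = op_scale (-1) (op_diff S T)"
    by (simp add: op_diff_def op_scale_def fun_eq_iff)
  then have 1: "op_norm (op_diff T S) \<le> op_norm (op_diff S T)"
    using bounded_op_scale(2)[OF bounded_op_diff(1)[OF assms], of "-1"] by simp
  have "op_diff S T = op_scale (-1) (op_diff T S)"
    by (simp add: op_diff_def op_scale_def fun_eq_iff)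
  then have 2: "op_norm (op_diff S T) \<le> op_norm (op_diff T S)"
    using bounded_op_scale(2)[OF bounded_op_diff(1)[OF assms(2,1)], of "-1"] by simp
  show ?thesis using 1 2 by simp
qed

lemma op_norm_triangle:
  assumes "bounded_op A" "bounded_op B" "bounded_op C"
  shows "op_norm (op_diff A C) \<le> op_norm (op_diff A B) + op_norm (op_diff B C)"
proof -
  have "op_diff A C = op_add (op_diff A B) (op_diff B C)"
    by (simp add: op_diff_def op_add_def fun_eq_iff)
  then show ?thesis using bounded_op_add(2)[OF bounded_op_diff(1)[OF assms(1,2)] bounded_op_diff(1)[OF assms(2,3)]]
    by simp
qed

lemma ell2_sum:
  assumes "finite F" "\<And>y. y \<in> F \<Longrightarrow> f y \<in> ell2"
  shows "(\<lambda>x. \<Sum>y\<in>F. c y * f y x) \<in> ell2"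
  using assms
proof (induction F rule: finite_induct)
  case empty then show ?case by simp
next
  case (insert a F)
  have "(\<lambda>x. (\<Sum>y\<in>F. c y * f y x) + c a * f a x) \<in> ell2"
    using insert by (intro ell2_lc) auto
  then show ?case using insert by (simp add: add.commute)
qed

lemma bop_sum:
  assumes T: "bounded_op T" and "finite F" "\<And>y. y \<in> F \<Longrightarrow> f y \<in> ell2"
  shows "T (\<lambda>x. \<Sum>y\<in>F. c y * f y x) = (\<lambda>x. \<Sum>y\<in>F. c y * T (f y) x)"
  using assms(2,3)
proof (induction F rule: finite_induct)
  case empty then show ?case using bop_zero[OF T] by simp
next
  case (insert a F)
  have "T (\<lambda>x. (\<Sum>y\<in>F. c y * f y x) + c a * f a x) = (\<lambda>x. T (\<lambda>x. \<Sum>y\<in>F. c y * f y x) x + c a * T (f a) x)"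
    using insert by (intro bop_lin T ell2_sum) auto
  then show ?case using insert by (simp add: add.commute)
qed

lemma l2inner_sum1:
  assumes "finite F" "\<And>y. y \<in> F \<Longrightarrow> f y \<in> ell2" "h \<in> ell2"
  shows "l2inner (\<lambda>x. \<Sum>y\<in>F. c y * f y x) h = (\<Sum>y\<in>F. cnj (c y) * l2inner (f y) h)"
  using assms(1,2)
proof (induction F rule: finite_induct)
  case empty then show ?case by simp
next
  case (insert a F)
  have "l2inner (\<lambda>x. (\<Sum>y\<in>F. c y * f y x) + c a * f a x) h = l2inner (\<lambda>x. \<Sum>y\<in>F. c y * f y x) h + cnj (c a) * l2inner (f a) h"
    using insert assms(3) by (intro l2inner_lin1 ell2_sum) auto
  then show ?case using insert by (simp add: add.commute)
qed

lemma l2inner_sum2: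
  assumes "finite F" "\<And>y. y \<in> F \<Longrightarrow> f y \<in> ell2" "g \<in> ell2"
  shows "l2inner g (\<lambda>x. \<Sum>y\<in>F. c y * f y x) = (\<Sum>y\<in>F. c y * l2inner g (f y))"
  using assms(1,2)
proof (induction F rule: finite_induct)
  case empty then show ?case by simp
next
  case (insert a F)
  have "l2inner g (\<lambda>x. (\<Sum>y\<in>F. c y * f y x) + c a * f a x) = l2inner g (\<lambda>x. \<Sum>y\<in>F. c y * f y x) + c a * l2inner g (f a)"
    using insert assms(3) by (intro l2inner_lin2 ell2_sum) auto
  then show ?case using insert by (simp add: add.commute)
qed

lemma restrict_as_sum:
  assumes "finite F"
  shows "(\<lambda>x. if x \<in> F then g x else 0) = (\<lambda>x. \<Sum>y\<in>F. g y * delta y x)"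
  using assms by (auto simp: delta_def fun_eq_iff if_distrib sum.delta cong: if_cong)

lemma nsq_restrict:
  assumes "finite F"
  shows "nsq (\<lambda>x. if x \<in> F then g x else 0) = (\<Sum>x\<in>F. (cmod (g x))\<^sup>2)"
proof -
  have "((\<lambda>x. (cmod (if x \<in> F then g x else 0))\<^sup>2) has_sum (\<Sum>x\<in>F. (cmod (g x))\<^sup>2)) UNIV"
    by (rule has_sum_finite_neutralI[of F]) (use assms in auto)
  then show ?thesis unfolding nsq_def by (simp add: infsumI)
qed


section \<open>Adjoints\<close>

lemma l2inner_scale1: "g \<in> ell2 \<Longrightarrow> h \<in> ell2 \<Longrightarrow> l2inner (\<lambda>x. c * g x) h = cnj c * l2inner g h"
  using l2inner_lin1[OF ell2_zero, of g h c] by simp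

lemma l2inner_scale2: "g \<in> ell2 \<Longrightarrow> h \<in> ell2 \<Longrightarrow> l2inner g (\<lambda>x. c * h x) = c * l2inner g h"
  using l2inner_lin2[OF _ ell2_zero, of g h c] by simp

lemma l2inner_add1: "g1 \<in> ell2 \<Longrightarrow> g2 \<in> ell2 \<Longrightarrow> h \<in> ell2 \<Longrightarrow> l2inner (\<lambda>x. g1 x + g2 x) h = l2inner g1 h + l2inner g2 h"
  using l2inner_lin1[of g1 g2 h 1] by simp

lemma l2inner_diff1: "g1 \<in> ell2 \<Longrightarrow> g2 \<in> ell2 \<Longrightarrow> h \<in> ell2 \<Longrightarrow> l2inner (\<lambda>x. g1 x - g2 x) h = l2inner g1 h - l2inner g2 h"
  using l2inner_lin1[of g1 g2 h "-1"] by simp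

lemma l2inner_add2: "g \<in> ell2 \<Longrightarrow> h1 \<in> ell2 \<Longrightarrow> h2 \<in> ell2 \<Longrightarrow> l2inner g (\<lambda>x. h1 x + h2 x) = l2inner g h1 + l2inner g h2"
  using l2inner_lin2[of g h1 h2 1] by simp

lemma l2inner_diff2: "g \<in> ell2 \<Longrightarrow> h1 \<in> ell2 \<Longrightarrow> h2 \<in> ell2 \<Longrightarrow> l2inner g (\<lambda>x. h1 x - h2 x) = l2inner g h1 - l2inner g h2"
  using l2inner_lin2[of g h1 h2 "-1"] by simp

lemma is_adjoint_sym:
  assumes T: "bounded_op T" and S: "bounded_op S" and a: "is_adjoint T S"
  shows "is_adjoint S T"
  unfolding is_adjoint_def
proof (intro ballI)
  fix g h :: "'a \<Rightarrow> complex" assume g: "g \<in> ell2" and h: "h \<in> ell2"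
  have "l2inner (S g) h = cnj (l2inner h (S g))" using l2inner_cnj[OF h bop_ell2[OF S]] by simp
  also have "l2inner h (S g) = l2inner (T h) g" using a g h unfolding is_adjoint_def by simp
  also have "cnj (l2inner (T h) g) = l2inner g (T h)" using l2inner_cnj[OF bop_ell2[OF T] g] by simp
  finally show "l2inner (S g) h = l2inner g (T h)" .
qed

lemma adjoint_norm_le:
  assumes T: "bounded_op T" and S: "bounded_op S" and a: "is_adjoint T S"
  shows "op_norm S \<le> op_norm T"
proof (rule op_norm_le[OF op_norm_nonneg[OF T]])
  fix h :: "'a \<Rightarrow> complex" assume h: "h \<in> ell2"
  have Sh: "S h \<in> ell2" by (rule bop_ell2[OF S])
  have "complex_of_real (nsq (S h)) = l2inner (S h) (S h)" using l2inner_self[OF Sh] by simp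
  also have "\<dots> = l2inner (T (S h)) h" using a Sh h unfolding is_adjoint_def by simp
  finally have E: "complex_of_real (nsq (S h)) = l2inner (T (S h)) h" .
  have "nsq (S h) = cmod (l2inner (T (S h)) h)"
    unfolding E[symmetric] by (simp add: nsq_nonneg)
  also have "\<dots> \<le> l2norm (T (S h)) * l2norm h" by (rule cauchy_schwarz[OF bop_ell2[OF T] h])
  also have "\<dots> \<le> (op_norm T * l2norm (S h)) * l2norm h"
    by (rule mult_right_mono[OF bop_bound[OF T Sh] l2norm_nonneg])
  finally have 1: "(l2norm (S h))\<^sup>2 \<le> l2norm (S h) * (op_norm T * l2norm h)"
    by (simp add: l2norm_sq algebra_simps)
  show "l2norm (S h) \<le> op_norm T * l2norm h"
  proof (cases "l2norm (S h) = 0")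
    case True then show ?thesis using op_norm_nonneg[OF T] l2norm_nonneg[of h] by simp
  next
    case False
    then have "l2norm (S h) > 0" using l2norm_nonneg[of "S h"] by simp
    then show ?thesis using 1 by (simp add: power2_eq_square)
  qed
qed

lemma adjoint_norm_eq:
  assumes T: "bounded_op T" and S: "bounded_op S" and a: "is_adjoint T S"
  shows "op_norm S = op_norm T"
  using adjoint_norm_le[OF T S a] adjoint_norm_le[OF S T is_adjoint_sym[OF T S a]] by simp

lemma adjoint_unique:
  assumes T: "bounded_op T" and S1: "bounded_op S1" and S2: "bounded_op S2"
    and a1: "is_adjoint T S1" and a2: "is_adjoint T S2"
  shows "S1 = S2"
proof
  fix h
  show "S1 h = S2 h"
  proof (cases "h \<in> ell2")
    case False then show ?thesis using bop_out[OF S1] bop_out[OF S2] by simp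
  next
    case h: True
    define d where "d = (\<lambda>x. S1 h x - S2 h x)"
    have d: "d \<in> ell2" unfolding d_def by (intro ell2_diff bop_ell2 S1 S2)
    have "l2inner d d = l2inner d (S1 h) - l2inner d (S2 h)"
      unfolding d_def by (rule l2inner_diff2) (intro ell2_diff bop_ell2 S1 S2)+
    also have "\<dots> = 0"
    proof -
      have "l2inner d (S1 h) = l2inner (T d) h" using a1 d h unfolding is_adjoint_def by simp
      moreover have "l2inner d (S2 h) = l2inner (T d) h" using a2 d h unfolding is_adjoint_def by simp
      ultimately show ?thesis by simp
    qed
    finally have "nsq d = 0" using l2inner_self[OF d] by simp
    then have "d = (\<lambda>x. 0)" by (rule nsq_eq_0[OF d])
    then show ?thesis by (simp add: d_def fun_eq_iff)
  qed
qed

lemma is_adjoint_zero: "is_adjoint op_zero op_zero"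
  by (simp add: is_adjoint_def op_zero_def)

lemma is_adjoint_add:
  assumes "bounded_op A" "bounded_op A'" "bounded_op B" "bounded_op B'"
    "is_adjoint A A'" "is_adjoint B B'"
  shows "is_adjoint (op_add A B) (op_add A' B')"
  unfolding is_adjoint_def op_add_def
proof (intro ballI)
  fix g h :: "'a \<Rightarrow> complex" assume g: "g \<in> ell2" and h: "h \<in> ell2"
  have 1: "l2inner (A g) h = l2inner g (A' h)" "l2inner (B g) h = l2inner g (B' h)"
    using assms(5,6) g h unfolding is_adjoint_def by auto
  show "l2inner (\<lambda>x. A g x + B g x) h = l2inner g (\<lambda>x. A' h x + B' h x)"
    using l2inner_add1[OF bop_ell2[OF assms(1)] bop_ell2[OF assms(3)] h]
      l2inner_add2[OF g bop_ell2[OF assms(2)] bop_ell2[OF assms(4)]] 1 by simp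
qed

lemma is_adjoint_diff:
  assumes "bounded_op A" "bounded_op A'" "bounded_op B" "bounded_op B'"
    "is_adjoint A A'" "is_adjoint B B'"
  shows "is_adjoint (op_diff A B) (op_diff A' B')"
  unfolding is_adjoint_def op_diff_def
proof (intro ballI)
  fix g h :: "'a \<Rightarrow> complex" assume g: "g \<in> ell2" and h: "h \<in> ell2"
  have 1: "l2inner (A g) h = l2inner g (A' h)" "l2inner (B g) h = l2inner g (B' h)"
    using assms(5,6) g h unfolding is_adjoint_def by auto
  show "l2inner (\<lambda>x. A g x - B g x) h = l2inner g (\<lambda>x. A' h x - B' h x)"
    using l2inner_diff1[OF bop_ell2[OF assms(1)] bop_ell2[OF assms(3)] h]
      l2inner_diff2[OF g bop_ell2[OF assms(2)] bop_ell2[OF assms(4)]] 1 by simp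
qed

lemma is_adjoint_scale:
  assumes "bounded_op A" "bounded_op A'" "is_adjoint A A'"
  shows "is_adjoint (op_scale c A) (op_scale (cnj c) A')"
  unfolding is_adjoint_def op_scale_def
proof (intro ballI)
  fix g h :: "'a \<Rightarrow> complex" assume g: "g \<in> ell2" and h: "h \<in> ell2"
  have 1: "l2inner (A g) h = l2inner g (A' h)"
    using assms(3) g h unfolding is_adjoint_def by auto
  show "l2inner (\<lambda>x. c * A g x) h = l2inner g (\<lambda>x. cnj c * A' h x)"
    using l2inner_scale1[OF bop_ell2[OF assms(1)] h] l2inner_scale2[OF g bop_ell2[OF assms(2)]] 1 by simp
qed

lemma is_adjoint_mult:
  assumes "bounded_op A" "bounded_op A'" "bounded_op B" "bounded_op B'"
    "is_adjoint A A'" "is_adjoint B B'"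
  shows "is_adjoint (op_mult A B) (op_mult B' A')"
  unfolding is_adjoint_def op_mult_def
proof (intro ballI)
  fix g h :: "'a \<Rightarrow> complex" assume g: "g \<in> ell2" and h: "h \<in> ell2"
  have "l2inner (A (B g)) h = l2inner (B g) (A' h)"
    using assms(5) bop_ell2[OF assms(3)] h unfolding is_adjoint_def by blast
  also have "\<dots> = l2inner g (B' (A' h))"
    using assms(6) g bop_ell2[OF assms(2)] unfolding is_adjoint_def by blast
  finally show "l2inner (A (B g)) h = l2inner g (B' (A' h))" .
qed

definition adj :: "'a op \<Rightarrow> 'a op" where
  "adj T = (\<lambda>h. if h \<in> ell2 then (\<lambda>y. l2inner (T (delta y)) h) else (\<lambda>_. 0))"

lemma inner_restrict:
  assumes T: "bounded_op T" and F: "finite F" and h: "h \<in> ell2"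
  shows "l2inner (T (\<lambda>x. if x \<in> F then g x else 0)) h = (\<Sum>y\<in>F. cnj (g y) * l2inner (T (delta y)) h)"
proof -
  have "T (\<lambda>x. if x \<in> F then g x else 0) = (\<lambda>x. \<Sum>y\<in>F. g y * T (delta y) x)"
    unfolding restrict_as_sum[OF F] by (rule bop_sum[OF T F]) simp
  then show ?thesis using F h by (simp add: l2inner_sum1 bop_ell2[OF T])
qed

lemma adj_bound:
  assumes T: "bounded_op T" and h: "h \<in> ell2"
  shows "adj T h \<in> ell2 \<and> l2norm (adj T h) \<le> op_norm T * l2norm h"
proof (rule ell2_I')
  fix F :: "'a set" assume F: "finite F"
  define a where "a = (\<lambda>y. l2inner (T (delta y)) h)"
  define A where "A = (\<Sum>x\<in>F. (cmod (a x))\<^sup>2)"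
  have A0: "0 \<le> A" unfolding A_def by (simp add: sum_nonneg)
  define gF where "gF = (\<lambda>x. if x \<in> F then a x else 0)"
  have gF: "gF \<in> ell2" unfolding gF_def restrict_as_sum[OF F] by (rule ell2_sum[OF F]) simp
  have ngF: "l2norm gF = sqrt A" unfolding gF_def A_def by (simp add: l2norm_nsq nsq_restrict[OF F])
  have "l2inner (T gF) h = (\<Sum>y\<in>F. cnj (a y) * a y)"
    unfolding gF_def inner_restrict[OF T F h] a_def ..
  also have "\<dots> = complex_of_real A"
    unfolding A_def of_real_sum by (rule sum.cong[OF refl]) (metis complex_norm_square mult.commute of_real_power)
  finally have "A = cmod (l2inner (T gF) h)" using A0 by simp
  also have "\<dots> \<le> l2norm (T gF) * l2norm h" by (rule cauchy_schwarz[OF bop_ell2[OF T] h])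
  also have "\<dots> \<le> (op_norm T * sqrt A) * l2norm h"
    using bop_bound[OF T gF] ngF by (intro mult_right_mono l2norm_nonneg) auto
  finally have 1: "sqrt A * sqrt A \<le> sqrt A * (op_norm T * l2norm h)"
    using A0 by (simp add: algebra_simps)
  have "sqrt A \<le> op_norm T * l2norm h"
  proof (cases "sqrt A = 0")
    case True then show ?thesis using op_norm_nonneg[OF T] l2norm_nonneg[of h] by simp
  next
    case False then have p: "sqrt A > 0" using A0 by simp
    show ?thesis using mult_left_le_imp_le[OF 1 p] .
  qed
  moreover have "(\<Sum>x\<in>F. (cmod (adj T h x))\<^sup>2) = A"
    unfolding A_def a_def adj_def using h by simp
  ultimately show "sqrt (\<Sum>x\<in>F. (cmod (adj T h x))\<^sup>2) \<le> op_norm T * l2norm h" by simp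
qed

lemma adj_bounded:
  assumes T: "bounded_op T"
  shows "bounded_op (adj T)"
proof (rule bounded_opI[where K="op_norm T"])
  fix g h :: "'a \<Rightarrow> complex" and c assume g: "g \<in> ell2" and h: "h \<in> ell2"
  show "adj T (\<lambda>x. g x + c * h x) = (\<lambda>x. adj T g x + c * adj T h x)"
    using g h by (simp add: adj_def ell2_lc l2inner_lin2 bop_ell2[OF T])
qed (use adj_bound[OF T] in \<open>auto simp: adj_def\<close>)

lemma adj_is_adjoint:
  assumes T: "bounded_op T"
  shows "is_adjoint T (adj T)"
  unfolding is_adjoint_def
proof (intro ballI)
  fix g h :: "'a \<Rightarrow> complex" assume g: "g \<in> ell2" and h: "h \<in> ell2"
  define gR where "gR = (\<lambda>F x. if x \<in> F then g x else (0::complex))"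
  have "((\<lambda>y. cnj (g y) * adj T h y) has_sum l2inner g (adj T h)) UNIV"
    by (rule inner_has_sum[OF g]) (use adj_bound[OF T h] in blast)
  then have lim1: "((\<lambda>F. \<Sum>y\<in>F. cnj (g y) * adj T h y) \<longlongrightarrow> l2inner g (adj T h)) (finite_subsets_at_top UNIV)"
    by (simp add: has_sum_def)
  have eq: "\<forall>\<^sub>F F in finite_subsets_at_top UNIV. (\<Sum>y\<in>F. cnj (g y) * adj T h y) = l2inner (T (gR F)) h"
  proof (rule eventually_finite_subsets_at_top_weakI)
    fix F :: "'a set" assume F: "finite F"
    show "(\<Sum>y\<in>F. cnj (g y) * adj T h y) = l2inner (T (gR F)) h"
      unfolding gR_def inner_restrict[OF T F h] using h by (simp add: adj_def)
  qed
  have lim2: "((\<lambda>F. l2inner (T (gR F)) h) \<longlongrightarrow> l2inner (T g) h) (finite_subsets_at_top UNIV)"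
  proof -
    have "((\<lambda>F. l2inner (T (gR F)) h - l2inner (T g) h) \<longlongrightarrow> 0) (finite_subsets_at_top UNIV)"
    proof (rule Lim_null_comparison)
      have "((\<lambda>F. op_norm T * l2norm (\<lambda>x. g x - gR F x) * l2norm h) \<longlongrightarrow> op_norm T * 0 * l2norm h) (finite_subsets_at_top UNIV)"
        using tail_tendsto[OF g] unfolding gR_def by (intro tendsto_intros) auto
      then show "((\<lambda>F. op_norm T * l2norm (\<lambda>x. g x - gR F x) * l2norm h) \<longlongrightarrow> 0) (finite_subsets_at_top UNIV)"
        by simp
    next
      show "\<forall>\<^sub>F F in finite_subsets_at_top UNIV. norm (l2inner (T (gR F)) h - l2inner (T g) h) \<le> op_norm T * l2norm (\<lambda>x. g x - gR F x) * l2norm h"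
      proof (intro always_eventually allI)
        fix F
        have gRF: "gR F \<in> ell2" unfolding gR_def by (rule ell2_restrict2[OF g])
        have d: "(\<lambda>x. g x - gR F x) \<in> ell2" by (rule ell2_diff[OF g gRF])
        have "l2inner (T (gR F)) h - l2inner (T g) h = - l2inner (\<lambda>x. T g x - T (gR F) x) h"
          by (simp add: l2inner_diff1 bop_ell2[OF T] h)
        also have "(\<lambda>x. T g x - T (gR F) x) = T (\<lambda>x. g x - gR F x)"
          by (rule bop_diff[OF T g gRF, symmetric])
        finally have "norm (l2inner (T (gR F)) h - l2inner (T g) h) = cmod (l2inner (T (\<lambda>x. g x - gR F x)) h)"
          by simp
        also have "\<dots> \<le> l2norm (T (\<lambda>x. g x - gR F x)) * l2norm h"
          by (rule cauchy_schwarz[OF bop_ell2[OF T] h])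
        also have "\<dots> \<le> op_norm T * l2norm (\<lambda>x. g x - gR F x) * l2norm h"
          by (rule mult_right_mono[OF bop_bound[OF T d] l2norm_nonneg])
        finally show "norm (l2inner (T (gR F)) h - l2inner (T g) h) \<le> op_norm T * l2norm (\<lambda>x. g x - gR F x) * l2norm h" .
      qed
    qed
    then show ?thesis by (rule LIM_zero_cancel)
  qed
  have lim3: "((\<lambda>F. \<Sum>y\<in>F. cnj (g y) * adj T h y) \<longlongrightarrow> l2inner (T g) h) (finite_subsets_at_top UNIV)"
    using lim2 eq by (simp add: tendsto_cong)
  show "l2inner (T g) h = l2inner g (adj T h)"
    using tendsto_unique[OF finite_subsets_at_top_neq_bot lim3 lim1] .
qed

lemma adjoint_exists: "bounded_op T \<Longrightarrow> \<exists>S. bounded_op S \<and> is_adjoint T S"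
  using adj_bounded adj_is_adjoint by blast


lemma pt_op_in: "g \<in> ell2 \<Longrightarrow> pt_op D f g = (\<lambda>y. if y \<in> f ` D then g (inv_into D f y) else 0)"
  by (simp add: pt_op_def)

lemma pt_op_out: "g \<notin> ell2 \<Longrightarrow> pt_op D f g = (\<lambda>_. 0)"
  by (simp add: pt_op_def)

lemma pt_op_bound:
  assumes g: "g \<in> ell2"
  shows "pt_op D f g \<in> ell2 \<and> l2norm (pt_op D f g) \<le> 1 * l2norm g"
proof (rule ell2_I')
  fix F :: "'a set" assume F: "finite F"
  have e: "\<And>y. (cmod (pt_op D f g y))\<^sup>2 = (if y \<in> f ` D then (cmod (g (inv_into D f y)))\<^sup>2 else 0)"
    by (simp add: pt_op_in[OF g])
  have "(\<Sum>y\<in>F. (cmod (pt_op D f g y))\<^sup>2) = (\<Sum>y\<in>F \<inter> f ` D. (cmod (g (inv_into D f y)))\<^sup>2)"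
    unfolding e using F by (simp add: sum.inter_restrict)
  also have "\<dots> = (\<Sum>x\<in>inv_into D f ` (F \<inter> f ` D). (cmod (g x))\<^sup>2)"
    by (rule sum.reindex[symmetric, unfolded comp_def]) (rule inj_on_inv_into, blast)
  also have "\<dots> \<le> nsq g" using F by (intro finite_le_nsq g) auto
  finally show "sqrt (\<Sum>y\<in>F. (cmod (pt_op D f g y))\<^sup>2) \<le> 1 * l2norm g"
    by (simp add: l2norm_nsq)
qed

lemma bounded_pt_op: "bounded_op (pt_op D f)"
proof (rule bounded_opI[where K=1])
  fix g h :: "'a \<Rightarrow> complex" and c assume g: "g \<in> ell2" and h: "h \<in> ell2"
  show "pt_op D f (\<lambda>x. g x + c * h x) = (\<lambda>x. pt_op D f g x + c * pt_op D f h x)"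
    using g h by (simp add: pt_op_in ell2_lc fun_eq_iff)
qed (use pt_op_bound in \<open>auto simp: pt_op_out\<close>)

lemma op_norm_pt_op: "op_norm (pt_op D f) \<le> 1"
  by (rule op_norm_le) (use pt_op_bound in auto)

section \<open>C*-subalgebras and the uniform Roe algebra\<close>

lemma cstar_subalgI:
  assumes "A \<subseteq> {T. bounded_op T}" "op_zero \<in> A"
    "\<And>S T. S \<in> A \<Longrightarrow> T \<in> A \<Longrightarrow> op_add S T \<in> A"
    "\<And>c T. T \<in> A \<Longrightarrow> op_scale c T \<in> A"
    "\<And>S T. S \<in> A \<Longrightarrow> T \<in> A \<Longrightarrow> op_mult S T \<in> A"
    "\<And>T. T \<in> A \<Longrightarrow> \<exists>S\<in>A. is_adjoint T S"
    "\<And>T s. bounded_op T \<Longrightarrow> (\<And>n. s n \<in> A) \<Longrightarrow> (\<lambda>n. op_norm (op_diff (s n) T)) \<longlonglongrightarrow> 0 \<Longrightarrow> T \<in> A"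
  shows "cstar_subalg A"
  unfolding cstar_subalg_def
proof (intro conjI ballI allI impI)
  fix T s assume "bounded_op T \<and> (\<forall>n. s n \<in> A) \<and> (\<lambda>n. op_norm (op_diff (s n) T)) \<longlonglongrightarrow> 0"
  then show "T \<in> A" using assms(7) by blast
qed (use assms(1-6) in auto)

lemma cstar_parts:
  assumes "cstar_subalg A"
  shows "A \<subseteq> {T. bounded_op T}" "op_zero \<in> A"
     "\<forall>S\<in>A. \<forall>T\<in>A. op_add S T \<in> A"
     "\<forall>c. \<forall>T\<in>A. op_scale c T \<in> A"
     "\<forall>S\<in>A. \<forall>T\<in>A. op_mult S T \<in> A"
     "\<forall>T\<in>A. \<exists>S\<in>A. is_adjoint T S"
     "\<forall>T s. bounded_op T \<and> (\<forall>n. s n \<in> A) \<and>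
            (\<lambda>n. op_norm (op_diff (s n) T)) \<longlonglongrightarrow> 0 \<longrightarrow> T \<in> A"
proof -
  note c = assms[unfolded cstar_subalg_def]
  show "A \<subseteq> {T. bounded_op T}" using c[THEN conjunct1] .
  show "op_zero \<in> A" using c[THEN conjunct2, THEN conjunct1] .
  show "\<forall>S\<in>A. \<forall>T\<in>A. op_add S T \<in> A" using c[THEN conjunct2, THEN conjunct2, THEN conjunct1] .
  show "\<forall>c. \<forall>T\<in>A. op_scale c T \<in> A" using c[THEN conjunct2, THEN conjunct2, THEN conjunct2, THEN conjunct1] .
  show "\<forall>S\<in>A. \<forall>T\<in>A. op_mult S T \<in> A" using c[THEN conjunct2, THEN conjunct2, THEN conjunct2, THEN conjunct2, THEN conjunct1] .
  show "\<forall>T\<in>A. \<exists>S\<in>A. is_adjoint T S" using c[THEN conjunct2, THEN conjunct2, THEN conjunct2, THEN conjunct2, THEN conjunct2, THEN conjunct1] .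
  show "\<forall>T s. bounded_op T \<and> (\<forall>n. s n \<in> A) \<and>
            (\<lambda>n. op_norm (op_diff (s n) T)) \<longlonglongrightarrow> 0 \<longrightarrow> T \<in> A" using c[THEN conjunct2, THEN conjunct2, THEN conjunct2, THEN conjunct2, THEN conjunct2, THEN conjunct2] .
qed

lemma cstar_bounded: "cstar_subalg A \<Longrightarrow> T \<in> A \<Longrightarrow> bounded_op T"
  using cstar_parts(1) by fast

lemma cstar_zero: "cstar_subalg A \<Longrightarrow> op_zero \<in> A"
  using cstar_parts(2) by fast

lemma cstar_add: "cstar_subalg A \<Longrightarrow> S \<in> A \<Longrightarrow> T \<in> A \<Longrightarrow> op_add S T \<in> A"
  using cstar_parts(3) by fast

lemma cstar_scale: "cstar_subalg A \<Longrightarrow> T \<in> A \<Longrightarrow> op_scale c T \<in> A"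
  using cstar_parts(4) by fast

lemma cstar_mult: "cstar_subalg A \<Longrightarrow> S \<in> A \<Longrightarrow> T \<in> A \<Longrightarrow> op_mult S T \<in> A"
  using cstar_parts(5) by fast

lemma cstar_adj: "cstar_subalg A \<Longrightarrow> T \<in> A \<Longrightarrow> \<exists>S\<in>A. is_adjoint T S"
  using cstar_parts(6) by fast

lemma cstar_lim: "cstar_subalg A \<Longrightarrow> bounded_op T \<Longrightarrow> (\<And>n. s n \<in> A) \<Longrightarrow>
   (\<lambda>n. op_norm (op_diff (s n) T)) \<longlonglongrightarrow> 0 \<Longrightarrow> T \<in> A"
proof -
  assume "cstar_subalg A" "bounded_op T" "\<And>n. s n \<in> A" "(\<lambda>n. op_norm (op_diff (s n) T)) \<longlonglongrightarrow> 0"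
  then show "T \<in> A" using cstar_parts(7)[of A] by blast
qed

lemma cstar_diff: "cstar_subalg A \<Longrightarrow> S \<in> A \<Longrightarrow> T \<in> A \<Longrightarrow> op_diff S T \<in> A"
proof -
  assume A: "cstar_subalg A" and S: "S \<in> A" and T: "T \<in> A"
  have "op_diff S T = op_add S (op_scale (-1) T)"
    by (simp add: op_diff_def op_add_def op_scale_def fun_eq_iff)
  then show ?thesis using A S T cstar_add cstar_scale by metis
qed

lemma cstar_all_bounded: "cstar_subalg {T :: 'a op. bounded_op T}"
proof (rule cstar_subalgI)
  fix T :: "'a op" assume "T \<in> {T. bounded_op T}"
  then show "\<exists>S\<in>{T. bounded_op T}. is_adjoint T S" using adjoint_exists by blast
next
  fix S T :: "'a op" assume "S \<in> {T. bounded_op T}" "T \<in> {T. bounded_op T}"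
  then show "op_add S T \<in> {T. bounded_op T}" "op_mult S T \<in> {T. bounded_op T}"
    using bounded_op_add(1) bounded_op_mult(1) by auto
next
  fix c and T :: "'a op" assume "T \<in> {T. bounded_op T}"
  then show "op_scale c T \<in> {T. bounded_op T}" using bounded_op_scale(1) by auto
qed auto

abbreviation pts :: "'a::metric_space op set" where
  "pts \<equiv> {pt_op D f | D f. partial_translation D f}"

abbreviation Fam :: "'a::metric_space op set set" where
  "Fam \<equiv> {A. cstar_subalg A \<and> pts \<subseteq> A}"

lemma Fam_bounded: "{T :: 'a::metric_space op. bounded_op T} \<in> Fam"
  using cstar_all_bounded bounded_pt_op by blast

lemma roe_memI: "(\<And>A. cstar_subalg A \<Longrightarrow> pts \<subseteq> A \<Longrightarrow> T \<in> A) \<Longrightarrow> T \<in> uniform_roe"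
  unfolding uniform_roe_def by blast

lemma roe_memD: "T \<in> uniform_roe \<Longrightarrow> cstar_subalg A \<Longrightarrow> pts \<subseteq> A \<Longrightarrow> T \<in> A"
  unfolding uniform_roe_def by blast

lemma roe_sub: "cstar_subalg A \<Longrightarrow> pts \<subseteq> A \<Longrightarrow> uniform_roe \<subseteq> A"
  unfolding uniform_roe_def by blast

lemma roe_bounded: "T \<in> uniform_roe \<Longrightarrow> bounded_op T"
  using roe_sub[OF cstar_all_bounded] bounded_pt_op by blast

lemma pt_in_roe: "partial_translation D f \<Longrightarrow> pt_op D f \<in> uniform_roe"
  unfolding uniform_roe_def by blast

lemma roe_cstar: "cstar_subalg (uniform_roe :: 'a::metric_space op set)"
proof (rule cstar_subalgI)
  show "uniform_roe \<subseteq> {T. bounded_op T}" using roe_bounded by blast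
  show "op_zero \<in> uniform_roe" by (rule roe_memI) (rule cstar_zero)
  show "\<And>S T. S \<in> uniform_roe \<Longrightarrow> T \<in> uniform_roe \<Longrightarrow> op_add S T \<in> uniform_roe"
    by (rule roe_memI) (rule cstar_add, assumption, (erule roe_memD, assumption+)+)
  show "\<And>c T. T \<in> uniform_roe \<Longrightarrow> op_scale c T \<in> uniform_roe"
    by (rule roe_memI) (rule cstar_scale, assumption, (erule roe_memD, assumption+)+)
  show "\<And>S T. S \<in> uniform_roe \<Longrightarrow> T \<in> uniform_roe \<Longrightarrow> op_mult S T \<in> uniform_roe"
    by (rule roe_memI) (rule cstar_mult, assumption, (erule roe_memD, assumption+)+)
  show "T \<in> uniform_roe" if a: "bounded_op T" "\<And>n. s n \<in> uniform_roe" "(\<lambda>n. op_norm (op_diff (s n) T)) \<longlonglongrightarrow> 0" for T :: "'a op" and s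
  proof (rule roe_memI)
    fix A :: "'a op set"
    assume A: "cstar_subalg A" "pts \<subseteq> A"
    have "\<And>n. s n \<in> A" using roe_memD[OF a(2) A] .
    then show "T \<in> A" using cstar_lim[OF A(1) a(1) _ a(3)] by blast
  qed
next
  fix T :: "'a op" assume T: "T \<in> uniform_roe"
  have Tb: "bounded_op T" using roe_bounded[OF T] .
  have "adj T \<in> A" if A: "A \<in> Fam" for A
  proof -
    have "T \<in> A" using T A roe_memD by blast
    then obtain S where S: "S \<in> A" "is_adjoint T S" using cstar_adj A by blast
    have "S = adj T"
      by (rule adjoint_unique[OF Tb cstar_bounded[OF _ S(1)] adj_bounded[OF Tb] S(2) adj_is_adjoint[OF Tb]])
         (use A in blast)
    then show ?thesis using S by simp
  qed
  then have "adj T \<in> uniform_roe" by (intro roe_memI) blast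
  then show "\<exists>S\<in>uniform_roe. is_adjoint T S" using adj_is_adjoint[OF Tb] by blast
qed

section \<open>Conjugation by unitaries\<close>

definition Ad :: "'a op \<Rightarrow> 'a op \<Rightarrow> 'a op \<Rightarrow> 'a op" where
  "Ad U V T = (\<lambda>g. U (T (V g)))"

definition upair :: "'a op \<Rightarrow> 'a op \<Rightarrow> bool" where
  "upair U V \<longleftrightarrow> bounded_op U \<and> bounded_op V \<and> (\<forall>g\<in>ell2. U (V g) = g) \<and> (\<forall>g\<in>ell2. V (U g) = g)
     \<and> is_adjoint U V"

lemma upair_sym: "upair U V \<Longrightarrow> upair V U"
  unfolding upair_def using is_adjoint_sym by blast

lemma upair_comp:
  assumes "upair U V" "upair U' V'"
  shows "upair (op_mult U U') (op_mult V' V)"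
proof -
  have U: "bounded_op U" and V: "bounded_op V" and U': "bounded_op U'" and V': "bounded_op V'"
    and a: "is_adjoint U V" and a': "is_adjoint U' V'"
    and i1: "\<forall>g\<in>ell2. U (V g) = g" and i2: "\<forall>g\<in>ell2. V (U g) = g"
    and i1': "\<forall>g\<in>ell2. U' (V' g) = g" and i2': "\<forall>g\<in>ell2. V' (U' g) = g"
    using assms unfolding upair_def by auto
  have "\<forall>g\<in>ell2. op_mult U U' (op_mult V' V g) = g"
    using i1 i1' bop_ell2[OF V] by (simp add: op_mult_def)
  moreover have "\<forall>g\<in>ell2. op_mult V' V (op_mult U U' g) = g"
    using i2 i2' bop_ell2[OF U'] by (simp add: op_mult_def)
  moreover have "is_adjoint (op_mult U U') (op_mult V' V)"
    by (rule is_adjoint_mult[OF U V U' V' a a'])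
  ultimately show ?thesis unfolding upair_def
    using bounded_op_mult(1)[OF U U'] bounded_op_mult(1)[OF V' V] by blast
qed

lemma upair_isometry:
  assumes "upair U V" "g \<in> ell2"
  shows "l2norm (U g) = l2norm g"
proof -
  have U: "bounded_op U" and V: "bounded_op V" using assms unfolding upair_def by auto
  have "complex_of_real (nsq (U g)) = l2inner (U g) (U g)" by (rule l2inner_self[OF bop_ell2[OF U], symmetric])
  also have "\<dots> = l2inner g (V (U g))" using assms bop_ell2[OF U] unfolding upair_def is_adjoint_def by blast
  also have "\<dots> = l2inner g g" using assms unfolding upair_def by simp
  also have "\<dots> = complex_of_real (nsq g)" by (rule l2inner_self[OF assms(2)])
  finally show ?thesis by (simp add: l2norm_nsq)
qed

lemma Ad_bounded:
  assumes P: "upair U V" and T: "bounded_op T"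
  shows "bounded_op (Ad U V T)" "op_norm (Ad U V T) \<le> op_norm T"
proof -
  have U: "bounded_op U" and V: "bounded_op V" using P unfolding upair_def by auto
  have e: "Ad U V T = op_mult U (op_mult T V)" by (simp add: Ad_def op_mult_def)
  show "bounded_op (Ad U V T)" unfolding e by (intro bounded_op_mult U V T)
  show "op_norm (Ad U V T) \<le> op_norm T"
  proof (rule op_norm_le[OF op_norm_nonneg[OF T]])
    fix g :: "'a \<Rightarrow> complex" assume g: "g \<in> ell2"
    have "l2norm (Ad U V T g) = l2norm (T (V g))"
      unfolding Ad_def by (rule upair_isometry[OF P bop_ell2[OF T]])
    also have "\<dots> \<le> op_norm T * l2norm (V g)" by (rule bop_bound[OF T bop_ell2[OF V]])
    also have "l2norm (V g) = l2norm g" by (rule upair_isometry[OF upair_sym[OF P] g])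
    finally show "l2norm (Ad U V T g) \<le> op_norm T * l2norm g" .
  qed
qed

lemma Ad_inv:
  assumes P: "upair U V" and T: "bounded_op T"
  shows "Ad V U (Ad U V T) = T"
proof
  fix g
  have U: "bounded_op U" and V: "bounded_op V" using P unfolding upair_def by auto
  show "Ad V U (Ad U V T) g = T g"
  proof (cases "g \<in> ell2")
    case True
    then show ?thesis using P bop_ell2[OF T] unfolding Ad_def upair_def by simp
  next
    case False
    then show ?thesis using bop_out[OF U False] bop_out[OF T False] bop_zero[OF T] bop_zero[OF V] bop_zero[OF U]
      unfolding Ad_def by simp
  qed
qed

lemma Ad_zero: assumes "upair U V" shows "Ad U V op_zero = op_zero"
proof -
  have U: "bounded_op U" using assms unfolding upair_def by auto
  show ?thesis using bop_zero[OF U] unfolding Ad_def op_zero_def by simp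
qed

lemma Ad_add:
  assumes P: "upair U V" and S: "bounded_op S" and T: "bounded_op T"
  shows "Ad U V (op_add S T) = op_add (Ad U V S) (Ad U V T)"
proof -
  have U: "bounded_op U" using P unfolding upair_def by auto
  show ?thesis unfolding Ad_def op_add_def
    using bop_add[OF U bop_ell2[OF S] bop_ell2[OF T]] by simp
qed

lemma Ad_diff:
  assumes P: "upair U V" and S: "bounded_op S" and T: "bounded_op T"
  shows "Ad U V (op_diff S T) = op_diff (Ad U V S) (Ad U V T)"
proof -
  have U: "bounded_op U" using P unfolding upair_def by auto
  show ?thesis unfolding Ad_def op_diff_def
    using bop_diff[OF U bop_ell2[OF S] bop_ell2[OF T]] by simp
qed

lemma Ad_scale:
  assumes P: "upair U V" and T: "bounded_op T"
  shows "Ad U V (op_scale c T) = op_scale c (Ad U V T)"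
proof -
  have U: "bounded_op U" using P unfolding upair_def by auto
  show ?thesis unfolding Ad_def op_scale_def
    using bop_scale[OF U bop_ell2[OF T]] by simp
qed

lemma Ad_mult:
  assumes P: "upair U V" and S: "bounded_op S" and T: "bounded_op T"
  shows "Ad U V (op_mult S T) = op_mult (Ad U V S) (Ad U V T)"
  using P bop_ell2[OF T] unfolding Ad_def op_mult_def upair_def by simp

lemma Ad_adjoint:
  assumes P: "upair U V" and S: "bounded_op S" and T: "bounded_op T" and a: "is_adjoint T S"
  shows "is_adjoint (Ad U V T) (Ad U V S)"
proof -
  have U: "bounded_op U" and V: "bounded_op V" and UV: "is_adjoint U V" and VU: "is_adjoint V U"
    using P upair_sym[OF P] unfolding upair_def by auto
  have "is_adjoint (op_mult U (op_mult T V)) (op_mult (op_mult U S) V)"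
    by (intro is_adjoint_mult bounded_op_mult U V S T UV VU a)
  then show ?thesis by (simp add: Ad_def op_mult_def)
qed

lemma Ad_comp: "Ad U V (Ad U' V' T) = Ad (op_mult U U') (op_mult V' V) T"
  by (simp add: Ad_def op_mult_def)

lemma Ad_preserves_roe:
  assumes P: "upair U V"
    and gen: "\<And>D f. partial_translation D f \<Longrightarrow> Ad U V (pt_op D f) \<in> uniform_roe"
    and T: "T \<in> uniform_roe"
  shows "Ad U V T \<in> uniform_roe"
proof -
  have "Ad U V T \<in> A" if A: "A \<in> Fam" for A
  proof -
    have Ac: "cstar_subalg A" using A by blast
    define A' where "A' = {T. bounded_op T \<and> Ad U V T \<in> A}"
    have "cstar_subalg A'"
    proof (rule cstar_subalgI)
      show "A' \<subseteq> {T. bounded_op T}" unfolding A'_def by blast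
      show "op_zero \<in> A'" unfolding A'_def using Ad_zero[OF P] cstar_zero[OF Ac] by simp
      show "op_add S T \<in> A'" if "S \<in> A'" "T \<in> A'" for S T
      proof -
        have S: "bounded_op S" "Ad U V S \<in> A" and T: "bounded_op T" "Ad U V T \<in> A"
          using that unfolding A'_def by auto
        show ?thesis unfolding A'_def
          using bounded_op_add(1)[OF S(1) T(1)] Ad_add[OF P S(1) T(1)] cstar_add[OF Ac S(2) T(2)] by simp
      qed
      show "op_scale c T \<in> A'" if "T \<in> A'" for c T
      proof -
        have T: "bounded_op T" "Ad U V T \<in> A"
          using that unfolding A'_def by auto
        show ?thesis unfolding A'_def
          using bounded_op_scale(1)[OF T(1)] Ad_scale[OF P T(1)] cstar_scale[OF Ac T(2)] by simp
      qed
      show "op_mult S T \<in> A'" if "S \<in> A'" "T \<in> A'" for S T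
      proof -
        have S: "bounded_op S" "Ad U V S \<in> A" and T: "bounded_op T" "Ad U V T \<in> A"
          using that unfolding A'_def by auto
        show ?thesis unfolding A'_def
          using bounded_op_mult(1)[OF S(1) T(1)] Ad_mult[OF P S(1) T(1)] cstar_mult[OF Ac S(2) T(2)] by simp
      qed
      show "\<exists>S\<in>A'. is_adjoint T S" if T: "T \<in> A'" for T
      proof -
        have Tb: "bounded_op T" and TA: "Ad U V T \<in> A" using T unfolding A'_def by auto
        obtain S' where S': "S' \<in> A" "is_adjoint (Ad U V T) S'" using cstar_adj[OF Ac TA] by blast
        have S'b: "bounded_op S'" using cstar_bounded[OF Ac S'(1)] .
        define S where "S = Ad V U S'"
        have Sb: "bounded_op S" unfolding S_def by (rule Ad_bounded(1)[OF upair_sym[OF P] S'b])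
        have "Ad U V S = S'" unfolding S_def by (rule Ad_inv[OF upair_sym[OF P] S'b])
        then have "S \<in> A'" using S' Sb unfolding A'_def by simp
        moreover have "is_adjoint T S"
          using Ad_adjoint[OF upair_sym[OF P] S'b Ad_bounded(1)[OF P Tb] S'(2)] Ad_inv[OF P Tb]
          unfolding S_def by simp
        ultimately show ?thesis by blast
      qed
      show "T \<in> A'" if T: "bounded_op T" and s: "\<And>n. s n \<in> A'" and l: "(\<lambda>n. op_norm (op_diff (s n) T)) \<longlonglongrightarrow> 0" for T s
      proof -
        have sb: "\<And>n. bounded_op (s n)" using s unfolding A'_def by blast
        have "(\<lambda>n. op_norm (op_diff (Ad U V (s n)) (Ad U V T))) \<longlonglongrightarrow> 0"
        proof (rule Lim_null_comparison[OF _ l])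
          show "\<forall>\<^sub>F n in sequentially. norm (op_norm (op_diff (Ad U V (s n)) (Ad U V T))) \<le> op_norm (op_diff (s n) T)"
          proof (intro always_eventually allI)
            fix n
            have "op_diff (Ad U V (s n)) (Ad U V T) = Ad U V (op_diff (s n) T)"
              by (rule Ad_diff[OF P sb T, symmetric])
            then have "op_norm (op_diff (Ad U V (s n)) (Ad U V T)) \<le> op_norm (op_diff (s n) T)"
              using Ad_bounded(2)[OF P bounded_op_diff(1)[OF sb T]] by simp
            moreover have "0 \<le> op_norm (op_diff (Ad U V (s n)) (Ad U V T))"
              by (intro op_norm_nonneg bounded_op_diff Ad_bounded P sb T)
            ultimately show "norm (op_norm (op_diff (Ad U V (s n)) (Ad U V T))) \<le> op_norm (op_diff (s n) T)"
              by simp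
          qed
        qed
        moreover have sA: "\<And>n. Ad U V (s n) \<in> A" using s unfolding A'_def by blast
        ultimately have "Ad U V T \<in> A"
          using cstar_lim[OF Ac Ad_bounded(1)[OF P T], of "\<lambda>n. Ad U V (s n)"] by blast
        then show ?thesis using T unfolding A'_def by blast
      qed
    qed
    moreover have "pts \<subseteq> A'"
    proof
      fix X :: "'a op" assume "X \<in> pts"
      then obtain D f where X: "X = pt_op D f" "partial_translation D f" by blast
      have "Ad U V X \<in> uniform_roe" using gen X by simp
      then have "Ad U V X \<in> A" using roe_sub[of A] A by blast
      then show "X \<in> A'" unfolding A'_def using X bounded_pt_op by simp
    qed
    ultimately have "uniform_roe \<subseteq> A'" by (rule roe_sub)
    then show ?thesis using T unfolding A'_def by blast
  qed
  then show ?thesis by (intro roe_memI) blast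
qed


definition opsum :: "'k set \<Rightarrow> ('k \<Rightarrow> complex) \<Rightarrow> ('k \<Rightarrow> 'a op) \<Rightarrow> 'a op" where
  "opsum K c M = (\<lambda>g x. \<Sum>k\<in>K. c k * M k g x)"

lemma opsum_empty: "opsum {} c M = op_zero"
  by (simp add: opsum_def op_zero_def)

lemma opsum_insert: "finite K \<Longrightarrow> k \<notin> K \<Longrightarrow> opsum (insert k K) c M = op_add (op_scale (c k) (M k)) (opsum K c M)"
  by (simp add: opsum_def op_add_def op_scale_def)

lemma opsum_in:
  assumes A: "cstar_subalg A" and K: "finite K" and M: "\<And>k. k \<in> K \<Longrightarrow> M k \<in> A"
  shows "opsum K c M \<in> A"
  using K M
proof (induction K rule: finite_induct)
  case empty then show ?case using cstar_zero[OF A] by (simp add: opsum_empty)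
next
  case (insert k K)
  then show ?case by (simp add: opsum_insert cstar_add[OF A] cstar_scale[OF A])
qed

lemma opsum_bounded:
  assumes K: "finite K" and M: "\<And>k. k \<in> K \<Longrightarrow> bounded_op (M k)"
  shows "bounded_op (opsum K c M) \<and> op_norm (opsum K c M) \<le> (\<Sum>k\<in>K. cmod (c k) * op_norm (M k))"
  using K M
proof (induction K rule: finite_induct)
  case empty then show ?case by (simp add: opsum_empty)
next
  case (insert k K)
  have Mk: "bounded_op (M k)" using insert by simp
  have IH: "bounded_op (opsum K c M)" "op_norm (opsum K c M) \<le> (\<Sum>k\<in>K. cmod (c k) * op_norm (M k))"
    using insert by auto
  have b: "bounded_op (op_scale (c k) (M k))" by (rule bounded_op_scale(1)[OF Mk])
  have "op_norm (op_add (op_scale (c k) (M k)) (opsum K c M)) \<le> op_norm (op_scale (c k) (M k)) + op_norm (opsum K c M)"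
    by (rule bounded_op_add(2)[OF b IH(1)])
  also have "\<dots> \<le> cmod (c k) * op_norm (M k) + (\<Sum>k\<in>K. cmod (c k) * op_norm (M k))"
    by (intro add_mono bounded_op_scale(2)[OF Mk] IH(2))
  finally show ?case using insert bounded_op_add(1)[OF b IH(1)] by (simp add: opsum_insert)
qed

lemma opsum_diff: "op_diff (opsum K c M) (opsum K c' M) = opsum K (\<lambda>k. c k - c' k) M"
  by (simp add: opsum_def op_diff_def sum_subtractf algebra_simps fun_eq_iff)

definition mop :: "('a \<Rightarrow> complex) \<Rightarrow> 'a op" where
  "mop \<phi> = (\<lambda>g. if g \<in> ell2 then (\<lambda>x. \<phi> x * g x) else (\<lambda>_. 0))"

lemma mop_bound:
  assumes "\<And>x. cmod (\<phi> x) \<le> 1" "g \<in> ell2"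
  shows "mop \<phi> g \<in> ell2 \<and> l2norm (mop \<phi> g) \<le> 1 * l2norm g"
proof (rule ell2_I')
  fix F :: "'a set" assume F: "finite F"
  have "(\<Sum>x\<in>F. (cmod (mop \<phi> g x))\<^sup>2) \<le> (\<Sum>x\<in>F. (cmod (g x))\<^sup>2)"
  proof (rule sum_mono)
    fix x
    have "cmod (\<phi> x * g x) \<le> cmod (g x)"
      using assms(1)[of x] by (simp add: norm_mult mult_left_le_one_le)
    then show "(cmod (mop \<phi> g x))\<^sup>2 \<le> (cmod (g x))\<^sup>2"
      using assms(2) by (simp add: mop_def power_mono)
  qed
  then show "sqrt (\<Sum>x\<in>F. (cmod (mop \<phi> g x))\<^sup>2) \<le> 1 * l2norm g"
    using finite_le_l2norm[OF assms(2) F] by (simp add: order_trans[OF real_sqrt_le_mono])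
qed

lemma mop_bounded:
  assumes "\<And>x. cmod (\<phi> x) \<le> 1"
  shows "bounded_op (mop \<phi>)"
proof (rule bounded_opI[where K=1])
  fix g h :: "'a \<Rightarrow> complex" and c assume g: "g \<in> ell2" and h: "h \<in> ell2"
  show "mop \<phi> (\<lambda>x. g x + c * h x) = (\<lambda>x. mop \<phi> g x + c * mop \<phi> h x)"
    using g h by (simp add: mop_def ell2_lc algebra_simps)
next
  fix g :: "'a \<Rightarrow> complex" assume g: "g \<in> ell2"
  show "mop \<phi> g \<in> ell2" using mop_bound[of \<phi> g] assms g by blast
  show "l2norm (mop \<phi> g) \<le> 1 * l2norm g" using mop_bound[of \<phi> g] assms g by blast
next
  fix g :: "'a \<Rightarrow> complex" assume g: "g \<notin> ell2"
  show "mop \<phi> g = (\<lambda>_. 0)" using g by (simp add: mop_def)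
qed

lemma mop_comp:
  assumes "\<And>x. cmod (\<psi> x) \<le> 1"
  shows "mop \<phi> (mop \<psi> g) = mop (\<lambda>x. \<phi> x * \<psi> x) g"
proof (cases "g \<in> ell2")
  case True
  have "mop \<psi> g \<in> ell2" using mop_bound[of \<psi> g] assms True by blast
  then show ?thesis using True by (simp add: mop_def mult.assoc)
next
  case False then show ?thesis by (simp add: mop_def)
qed

lemma mop_upair:
  assumes u: "\<And>x. cmod (\<phi> x) = 1"
  shows "upair (mop \<phi>) (mop (\<lambda>x. cnj (\<phi> x)))"
proof -
  have b1: "bounded_op (mop \<phi>)" using u by (intro mop_bounded) simp
  have b2: "bounded_op (mop (\<lambda>x. cnj (\<phi> x)))" using u by (intro mop_bounded) simp
  have e1: "\<phi> x * cnj (\<phi> x) = 1" for x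
    using u[of x] by (metis complex_norm_square of_real_1 power_one)
  have i1: "\<forall>g\<in>ell2. mop \<phi> (mop (\<lambda>x. cnj (\<phi> x)) g) = g"
  proof
    fix g :: "'a \<Rightarrow> complex" assume g: "g \<in> ell2"
    have "mop \<phi> (mop (\<lambda>x. cnj (\<phi> x)) g) = mop (\<lambda>x. \<phi> x * cnj (\<phi> x)) g"
      by (rule mop_comp) (simp add: u)
    then show "mop \<phi> (mop (\<lambda>x. cnj (\<phi> x)) g) = g" using g by (simp add: mop_def e1)
  qed
  have i2: "\<forall>g\<in>ell2. mop (\<lambda>x. cnj (\<phi> x)) (mop \<phi> g) = g"
  proof
    fix g :: "'a \<Rightarrow> complex" assume g: "g \<in> ell2"
    have "mop (\<lambda>x. cnj (\<phi> x)) (mop \<phi> g) = mop (\<lambda>x. cnj (\<phi> x) * \<phi> x) g"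
      by (rule mop_comp) (simp add: u)
    then show "mop (\<lambda>x. cnj (\<phi> x)) (mop \<phi> g) = g" using g e1 by (simp add: mop_def mult.commute)
  qed
  have a: "is_adjoint (mop \<phi>) (mop (\<lambda>x. cnj (\<phi> x)))"
    unfolding is_adjoint_def
  proof (intro ballI)
    fix g h :: "'a \<Rightarrow> complex" assume g: "g \<in> ell2" and h: "h \<in> ell2"
    show "l2inner (mop \<phi> g) h = l2inner g (mop (\<lambda>x. cnj (\<phi> x)) h)"
      using g h by (simp add: mop_def l2inner_def algebra_simps)
  qed
  show ?thesis unfolding upair_def using b1 b2 i1 i2 a by blast
qed

section \<open>The diagonal flow\<close>

definition uu :: "('a \<Rightarrow> int) \<Rightarrow> real \<Rightarrow> 'a op" where
  "uu h t = mop (\<lambda>x. cis (t * of_int (h x)))"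

definition alpha :: "('a \<Rightarrow> int) \<Rightarrow> real \<Rightarrow> 'a op \<Rightarrow> 'a op" where
  "alpha h t = Ad (uu h t) (uu h (-t))"

lemma uu_upair: "upair (uu h t) (uu h (-t))"
proof -
  have "upair (mop (\<lambda>x. cis (t * of_int (h x)))) (mop (\<lambda>x. cnj (cis (t * of_int (h x)))))"
    by (rule mop_upair) simp
  then show ?thesis by (simp add: uu_def cis_cnj)
qed

lemma uu_bounded: "bounded_op (uu h t)"
  using uu_upair unfolding upair_def by blast

lemma uu_comp: "uu h s (uu h t g) = uu h (s + t) g"
  by (simp add: uu_def mop_comp[of "\<lambda>x. cis (t * of_int (h x))"] cis_mult distrib_right)

lemma alpha_0: "bounded_op T \<Longrightarrow> alpha h 0 T = T"
proof -
  assume T: "bounded_op T"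
  have "alpha h 0 T = Ad (uu h 0) (uu h 0) T" by (simp add: alpha_def)
  also have "uu h 0 = mop (\<lambda>x. 1)" by (simp add: uu_def)
  finally have e: "alpha h 0 T = Ad (mop (\<lambda>x. 1)) (mop (\<lambda>x. 1)) T" .
  show ?thesis
  proof
    fix g show "alpha h 0 T g = T g"
      unfolding e using bop_ell2[OF T, of g] bop_zero[OF T] bop_out[OF T, of g]
      by (cases "g \<in> ell2") (auto simp: Ad_def mop_def)
  qed
qed

lemma alpha_pt:
  assumes M: "\<And>x. x \<in> D \<Longrightarrow> \<bar>h (f x) - h x\<bar> \<le> M" and inj: "inj_on f D"
  shows "alpha h t (pt_op D f) = opsum {-M..M} (\<lambda>k. cis (t * of_int k)) (\<lambda>k. pt_op {x\<in>D. h (f x) - h x = k} f)"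
proof
  fix g
  show "alpha h t (pt_op D f) g = opsum {-M..M} (\<lambda>k. cis (t * of_int k)) (\<lambda>k. pt_op {x\<in>D. h (f x) - h x = k} f) g"
  proof (cases "g \<in> ell2")
    case False
    have "uu h (-t) g = (\<lambda>_. 0)" using False by (simp add: uu_def mop_def)
    then show ?thesis using False
      by (simp add: alpha_def Ad_def opsum_def pt_op_def uu_def mop_def)
  next
    case g: True
    have ug: "uu h (-t) g \<in> ell2" by (rule bop_ell2[OF uu_bounded])
    have pg: "pt_op D f (uu h (-t) g) \<in> ell2" by (rule bop_ell2[OF bounded_pt_op])
    show ?thesis
    proof
      fix y
      define Dk where "Dk = (\<lambda>k. {x\<in>D. h (f x) - h x = k})"
      have L: "alpha h t (pt_op D f) g y = (if y \<in> f ` D then cis (t * of_int (h y)) * (cis (- t * of_int (h (inv_into D f y))) * g (inv_into D f y)) else 0)"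
        using g ug pg by (simp add: alpha_def Ad_def uu_def mop_def pt_op_def)
      have R: "opsum {-M..M} (\<lambda>k. cis (t * of_int k)) (\<lambda>k. pt_op (Dk k) f) g y =
               (\<Sum>k\<in>{-M..M}. cis (t * of_int k) * (if y \<in> f ` Dk k then g (inv_into (Dk k) f y) else 0))"
        using g by (simp add: opsum_def pt_op_def)
      show "alpha h t (pt_op D f) g y = opsum {-M..M} (\<lambda>k. cis (t * of_int k)) (\<lambda>k. pt_op {x\<in>D. h (f x) - h x = k} f) g y"
      proof (cases "y \<in> f ` D")
        case False
        then have "\<And>k. y \<notin> f ` Dk k" unfolding Dk_def by auto
        then show ?thesis using L R False unfolding Dk_def by simp
      next
        case True
        then obtain x where x: "x \<in> D" "y = f x" by blast
        have ix: "inv_into D f y = x" using x inj by (simp add: inv_into_f_f)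
        define k0 where "k0 = h (f x) - h x"
        have k0: "k0 \<in> {-M..M}" using M[OF x(1)] unfolding k0_def by auto
        have yk: "y \<in> f ` Dk k \<longleftrightarrow> k = k0" for k
        proof
          assume "y \<in> f ` Dk k"
          then obtain x' where x': "x' \<in> D" "h (f x') - h x' = k" "y = f x'" unfolding Dk_def by blast
          then have "x' = x" using inj x by (metis inj_on_def)
          then show "k = k0" using x' k0_def by simp
        next
          assume "k = k0" then show "y \<in> f ` Dk k" using x unfolding Dk_def k0_def by blast
        qed
        have ixk: "inv_into (Dk k0) f y = x"
        proof -
          have "inj_on f (Dk k0)" using inj unfolding Dk_def by (rule inj_on_subset) blast
          moreover have "x \<in> Dk k0" using x unfolding Dk_def k0_def by simp
          ultimately show ?thesis using x by (simp add: inv_into_f_f)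
        qed
        have "(\<Sum>k\<in>{-M..M}. cis (t * of_int k) * (if y \<in> f ` Dk k then g (inv_into (Dk k) f y) else 0))
              = cis (t * of_int k0) * g x"
          using k0 ixk by (simp add: yk if_distrib sum.delta' cong: if_cong)
        moreover have "cis (t * of_int (h y)) * (cis (- t * of_int (h x)) * g x) = cis (t * of_int k0) * g x"
        proof -
          have "cis (t * of_int (h y)) * cis (- t * of_int (h x)) = cis (t * of_int k0)"
            unfolding cis_mult x(2) k0_def by (simp add: algebra_simps)
          then show ?thesis by (simp add: mult.assoc[symmetric])
        qed
        ultimately show ?thesis using L R True ix unfolding Dk_def by simp
      qed
    qed
  qed
qed


definition born :: "('a::metric_space \<Rightarrow> int) \<Rightarrow> bool" where
  "born h \<longleftrightarrow> (\<forall>R. \<exists>M. \<forall>x y. dist x y \<le> R \<longrightarrow> \<bar>h x - h y\<bar> \<le> M)"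

lemma alpha_bounded: "bounded_op T \<Longrightarrow> bounded_op (alpha h t T)"
  unfolding alpha_def by (rule Ad_bounded(1)[OF uu_upair])

lemma alpha_norm: "bounded_op T \<Longrightarrow> op_norm (alpha h t T) \<le> op_norm T"
  unfolding alpha_def by (rule Ad_bounded(2)[OF uu_upair])

lemma alpha_diff: "bounded_op S \<Longrightarrow> bounded_op T \<Longrightarrow> alpha h t (op_diff S T) = op_diff (alpha h t S) (alpha h t T)"
  unfolding alpha_def by (rule Ad_diff[OF uu_upair])

lemma alpha_add: "bounded_op S \<Longrightarrow> bounded_op T \<Longrightarrow> alpha h t (op_add S T) = op_add (alpha h t S) (alpha h t T)"
  unfolding alpha_def by (rule Ad_add[OF uu_upair])

lemma alpha_scale: "bounded_op T \<Longrightarrow> alpha h t (op_scale c T) = op_scale c (alpha h t T)"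
  unfolding alpha_def by (rule Ad_scale[OF uu_upair])

lemma alpha_mult: "bounded_op S \<Longrightarrow> bounded_op T \<Longrightarrow> alpha h t (op_mult S T) = op_mult (alpha h t S) (alpha h t T)"
  unfolding alpha_def by (rule Ad_mult[OF uu_upair])

lemma alpha_zero: "alpha h t op_zero = op_zero"
  unfolding alpha_def by (rule Ad_zero[OF uu_upair])

lemma alpha_adjoint: "bounded_op S \<Longrightarrow> bounded_op T \<Longrightarrow> is_adjoint T S \<Longrightarrow> is_adjoint (alpha h t T) (alpha h t S)"
  unfolding alpha_def by (rule Ad_adjoint[OF uu_upair])

lemma pt_bound_M:
  assumes "born h" "partial_translation D f"
  obtains M where "\<And>x. x \<in> D \<Longrightarrow> \<bar>h (f x) - h x\<bar> \<le> M" "inj_on f D"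
proof -
  obtain R where R: "\<forall>x\<in>D. dist x (f x) \<le> R" "inj_on f D" using assms(2) unfolding partial_translation_def by blast
  obtain M where M: "\<forall>x y. dist x y \<le> R \<longrightarrow> \<bar>h x - h y\<bar> \<le> M" using assms(1) unfolding born_def by blast
  have "\<And>x. x \<in> D \<Longrightarrow> \<bar>h (f x) - h x\<bar> \<le> M" using R M by (metis dist_commute)
  then show ?thesis using that R(2) by blast
qed

lemma pt_sub: "partial_translation D f \<Longrightarrow> D' \<subseteq> D \<Longrightarrow> partial_translation D' f"
  unfolding partial_translation_def by (meson inj_on_subset subsetD)

lemma alpha_pt_roe:
  assumes h: "born h" and pt: "partial_translation D f"
  shows "alpha h t (pt_op D f) \<in> uniform_roe"
proof -
  obtain M where M: "\<And>x. x \<in> D \<Longrightarrow> \<bar>h (f x) - h x\<bar> \<le> M" "inj_on f D" using pt_bound_M[OF h pt] by blast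
  have eq: "alpha h t (pt_op D f) = opsum {-M..M} (\<lambda>k. cis (t * of_int k)) (\<lambda>k. pt_op {x\<in>D. h (f x) - h x = k} f)"
    by (rule alpha_pt) (use M in auto)
  show ?thesis unfolding eq
  proof (rule opsum_in[OF roe_cstar])
    fix k show "pt_op {x\<in>D. h (f x) - h x = k} f \<in> uniform_roe"
      by (rule pt_in_roe, rule pt_sub[OF pt]) blast
  qed simp
qed

lemma alpha_roe:
  assumes h: "born h" and T: "T \<in> uniform_roe"
  shows "alpha h t T \<in> uniform_roe"
  unfolding alpha_def
  by (rule Ad_preserves_roe[OF uu_upair _ T]) (use alpha_pt_roe[OF h] in \<open>simp add: alpha_def\<close>)

definition cont :: "('a \<Rightarrow> int) \<Rightarrow> 'a op \<Rightarrow> bool" where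
  "cont h T \<longleftrightarrow> (\<forall>t0. ((\<lambda>t. op_norm (op_diff (alpha h t T) (alpha h t0 T))) \<longlongrightarrow> 0) (at t0))"

lemma alpha_pt_cont:
  assumes h: "born h" and pt: "partial_translation D f"
  shows "cont h (pt_op D f)"
  unfolding cont_def
proof
  fix t0 :: real
  obtain M where M: "\<And>x. x \<in> D \<Longrightarrow> \<bar>h (f x) - h x\<bar> \<le> M" "inj_on f D" using pt_bound_M[OF h pt] by blast
  define Mk where "Mk = (\<lambda>k. pt_op {x\<in>D. h (f x) - h x = k} f)"
  have Mkb: "\<And>k. bounded_op (Mk k)" unfolding Mk_def by (rule bounded_pt_op)
  have Mkn: "\<And>k. op_norm (Mk k) \<le> 1" unfolding Mk_def by (rule op_norm_pt_op)
  define B where "B = (\<lambda>t::real. \<Sum>k\<in>{-M..M}. cmod (cis (t * of_int k) - cis (t0 * of_int k)))"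
  have "(B \<longlongrightarrow> (\<Sum>k\<in>{-M..M}. cmod (cis (t0 * of_int k) - cis (t0 * of_int k)))) (at t0)"
    unfolding B_def by (intro tendsto_intros)
  then have B0: "(B \<longlongrightarrow> 0) (at t0)" by simp
  show "((\<lambda>t. op_norm (op_diff (alpha h t (pt_op D f)) (alpha h t0 (pt_op D f)))) \<longlongrightarrow> 0) (at t0)"
  proof (rule Lim_null_comparison[OF _ B0], intro always_eventually allI)
    fix t :: real
    have e: "op_diff (alpha h t (pt_op D f)) (alpha h t0 (pt_op D f)) = opsum {-M..M} (\<lambda>k. cis (t * of_int k) - cis (t0 * of_int k)) Mk"
    proof -
      have "alpha h s (pt_op D f) = opsum {-M..M} (\<lambda>k. cis (s * of_int k)) Mk" for s
        unfolding Mk_def by (rule alpha_pt) (use M in auto)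
      then show ?thesis by (simp add: opsum_diff)
    qed
    have ob: "bounded_op (opsum {-M..M} (\<lambda>k. cis (t * of_int k) - cis (t0 * of_int k)) Mk) \<and>
       op_norm (opsum {-M..M} (\<lambda>k. cis (t * of_int k) - cis (t0 * of_int k)) Mk) \<le> (\<Sum>k\<in>{-M..M}. cmod (cis (t * of_int k) - cis (t0 * of_int k)) * op_norm (Mk k))"
      by (rule opsum_bounded) (auto intro: Mkb)
    have "(\<Sum>k\<in>{-M..M}. cmod (cis (t * of_int k) - cis (t0 * of_int k)) * op_norm (Mk k)) \<le> B t"
      unfolding B_def by (intro sum_mono mult_left_le Mkn) auto
    then have "op_norm (opsum {-M..M} (\<lambda>k. cis (t * of_int k) - cis (t0 * of_int k)) Mk) \<le> B t" using ob by simp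
    moreover have "0 \<le> op_norm (opsum {-M..M} (\<lambda>k. cis (t * of_int k) - cis (t0 * of_int k)) Mk)"
      using ob op_norm_nonneg by blast
    ultimately show "norm (op_norm (op_diff (alpha h t (pt_op D f)) (alpha h t0 (pt_op D f)))) \<le> B t"
      unfolding e by simp
  qed
qed

lemma dnorm_nonneg: "bounded_op S \<Longrightarrow> bounded_op T \<Longrightarrow> 0 \<le> op_norm (op_diff S T)"
  by (intro op_norm_nonneg bounded_op_diff)

lemma cont_zero: "cont h op_zero"
proof -
  have "op_diff (op_zero :: 'a op) op_zero = op_zero" by (simp add: op_diff_def op_zero_def)
  then show ?thesis unfolding cont_def alpha_zero by simp
qed

lemma cont_add:
  assumes S: "bounded_op S" and T: "bounded_op T" and cS: "cont h S" and cT: "cont h T"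
  shows "cont h (op_add S T)"
  unfolding cont_def
proof
  fix t0 :: real
  let ?dS = "\<lambda>t. op_norm (op_diff (alpha h t S) (alpha h t0 S))"
  let ?dT = "\<lambda>t. op_norm (op_diff (alpha h t T) (alpha h t0 T))"
  have l: "((\<lambda>t. ?dS t + ?dT t) \<longlongrightarrow> 0) (at t0)"
    using cS cT unfolding cont_def by (intro tendsto_add_zero) auto
  show "((\<lambda>t. op_norm (op_diff (alpha h t (op_add S T)) (alpha h t0 (op_add S T)))) \<longlongrightarrow> 0) (at t0)"
  proof (rule Lim_null_comparison[OF _ l], intro always_eventually allI)
    fix t
    have e: "op_diff (alpha h t (op_add S T)) (alpha h t0 (op_add S T)) =
        op_add (op_diff (alpha h t S) (alpha h t0 S)) (op_diff (alpha h t T) (alpha h t0 T))"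
      unfolding alpha_add[OF S T] by (simp add: op_add_def op_diff_def fun_eq_iff)
    have bs: "bounded_op (op_diff (alpha h t S) (alpha h t0 S))" "bounded_op (op_diff (alpha h t T) (alpha h t0 T))"
      by (intro bounded_op_diff alpha_bounded S T)+
    show "norm (op_norm (op_diff (alpha h t (op_add S T)) (alpha h t0 (op_add S T)))) \<le> ?dS t + ?dT t"
      unfolding e using bounded_op_add[OF bs] op_norm_nonneg[OF bounded_op_add(1)[OF bs]] by simp
  qed
qed

lemma cont_scale:
  assumes T: "bounded_op T" and cT: "cont h T"
  shows "cont h (op_scale c T)"
  unfolding cont_def
proof
  fix t0 :: real
  let ?dT = "\<lambda>t. op_norm (op_diff (alpha h t T) (alpha h t0 T))"
  have l: "((\<lambda>t. cmod c * ?dT t) \<longlongrightarrow> 0) (at t0)"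
    using cT unfolding cont_def by (intro tendsto_mult_right_zero) auto
  show "((\<lambda>t. op_norm (op_diff (alpha h t (op_scale c T)) (alpha h t0 (op_scale c T)))) \<longlongrightarrow> 0) (at t0)"
  proof (rule Lim_null_comparison[OF _ l], intro always_eventually allI)
    fix t
    have e: "op_diff (alpha h t (op_scale c T)) (alpha h t0 (op_scale c T)) =
        op_scale c (op_diff (alpha h t T) (alpha h t0 T))"
      unfolding alpha_scale[OF T] by (simp add: op_scale_def op_diff_def fun_eq_iff algebra_simps)
    have bs: "bounded_op (op_diff (alpha h t T) (alpha h t0 T))"
      by (intro bounded_op_diff alpha_bounded T)+
    show "norm (op_norm (op_diff (alpha h t (op_scale c T)) (alpha h t0 (op_scale c T)))) \<le> cmod c * ?dT t"
      unfolding e using bounded_op_scale[OF bs] op_norm_nonneg[OF bounded_op_scale(1)[OF bs]] by simp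
  qed
qed

lemma cont_mult:
  assumes S: "bounded_op S" and T: "bounded_op T" and cS: "cont h S" and cT: "cont h T"
  shows "cont h (op_mult S T)"
  unfolding cont_def
proof
  fix t0 :: real
  let ?dS = "\<lambda>t. op_norm (op_diff (alpha h t S) (alpha h t0 S))"
  let ?dT = "\<lambda>t. op_norm (op_diff (alpha h t T) (alpha h t0 T))"
  have l: "((\<lambda>t. op_norm S * ?dT t + ?dS t * op_norm T) \<longlongrightarrow> 0) (at t0)"
    using cS cT unfolding cont_def by (intro tendsto_add_zero tendsto_mult_right_zero tendsto_mult_left_zero) auto
  show "((\<lambda>t. op_norm (op_diff (alpha h t (op_mult S T)) (alpha h t0 (op_mult S T)))) \<longlongrightarrow> 0) (at t0)"
  proof (rule Lim_null_comparison[OF _ l], intro always_eventually allI)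
    fix t
    let ?St = "alpha h t S" and ?S0 = "alpha h t0 S" and ?Tt = "alpha h t T" and ?T0 = "alpha h t0 T"
    have b: "bounded_op ?St" "bounded_op ?S0" "bounded_op ?Tt" "bounded_op ?T0"
      by (intro alpha_bounded S T)+
    have bd: "bounded_op (op_diff ?Tt ?T0)" "bounded_op (op_diff ?St ?S0)"
      by (intro bounded_op_diff b)+
    have e: "op_diff (alpha h t (op_mult S T)) (alpha h t0 (op_mult S T)) =
        op_add (op_mult ?St (op_diff ?Tt ?T0)) (op_mult (op_diff ?St ?S0) ?T0)"
    proof -
      have "?St (\<lambda>x. ?Tt g x - ?T0 g x) = (\<lambda>x. ?St (?Tt g) x - ?St (?T0 g) x)" for g
        by (rule bop_diff[OF b(1) bop_ell2[OF b(3)] bop_ell2[OF b(4)]])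
      then show ?thesis unfolding alpha_mult[OF S T]
        by (simp add: op_add_def op_diff_def op_mult_def fun_eq_iff)
    qed
    have m1: "bounded_op (op_mult ?St (op_diff ?Tt ?T0))" "op_norm (op_mult ?St (op_diff ?Tt ?T0)) \<le> op_norm ?St * ?dT t"
      using bounded_op_mult[OF b(1) bd(1)] by auto
    have m2: "bounded_op (op_mult (op_diff ?St ?S0) ?T0)" "op_norm (op_mult (op_diff ?St ?S0) ?T0) \<le> ?dS t * op_norm ?T0"
      using bounded_op_mult[OF bd(2) b(4)] by auto
    have "op_norm (op_diff (alpha h t (op_mult S T)) (alpha h t0 (op_mult S T))) \<le> op_norm ?St * ?dT t + ?dS t * op_norm ?T0"
      unfolding e using bounded_op_add(2)[OF m1(1) m2(1)] m1(2) m2(2) by linarith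
    also have "\<dots> \<le> op_norm S * ?dT t + ?dS t * op_norm T"
      using alpha_norm[OF S] alpha_norm[OF T] op_norm_nonneg[OF bd(1)] op_norm_nonneg[OF bd(2)]
      by (intro add_mono mult_right_mono mult_left_mono) auto
    finally show "norm (op_norm (op_diff (alpha h t (op_mult S T)) (alpha h t0 (op_mult S T)))) \<le> op_norm S * ?dT t + ?dS t * op_norm T"
      using op_norm_nonneg[OF bounded_op_diff(1)[OF alpha_bounded[OF bounded_op_mult(1)[OF S T]] alpha_bounded[OF bounded_op_mult(1)[OF S T]]]]
      by simp
  qed
qed

lemma cont_adj:
  assumes S: "bounded_op S" and T: "bounded_op T" and a: "is_adjoint T S" and cT: "cont h T"
  shows "cont h S"
proof -
  have "op_norm (op_diff (alpha h t S) (alpha h t0 S)) = op_norm (op_diff (alpha h t T) (alpha h t0 T))" for t t0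
  proof (rule adjoint_norm_eq)
    show "bounded_op (op_diff (alpha h t T) (alpha h t0 T))" "bounded_op (op_diff (alpha h t S) (alpha h t0 S))"
      by (intro bounded_op_diff alpha_bounded S T)+
    show "is_adjoint (op_diff (alpha h t T) (alpha h t0 T)) (op_diff (alpha h t S) (alpha h t0 S))"
      by (intro is_adjoint_diff alpha_bounded alpha_adjoint S T a)
  qed
  then show ?thesis using cT unfolding cont_def by simp
qed

lemma cont_lim:
  assumes T: "bounded_op T" and sb: "\<And>n. bounded_op (s n)" and cs: "\<And>n. cont h (s n)"
    and l: "(\<lambda>n. op_norm (op_diff (s n) T)) \<longlonglongrightarrow> 0"
  shows "cont h T"
  unfolding cont_def
proof
  fix t0 :: real
  show "((\<lambda>t. op_norm (op_diff (alpha h t T) (alpha h t0 T))) \<longlongrightarrow> 0) (at t0)"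
  proof (rule tendstoI)
    fix e :: real assume e: "e > 0"
    have "\<forall>\<^sub>F n in sequentially. op_norm (op_diff (s n) T) < e / 3"
      using order_tendstoD(2)[OF l, of "e/3"] e by simp
    then obtain n where n: "op_norm (op_diff (s n) T) < e / 3"
      by (auto simp: eventually_sequentially)
    have l2: "((\<lambda>t. op_norm (op_diff (alpha h t (s n)) (alpha h t0 (s n)))) \<longlongrightarrow> 0) (at t0)"
      using cs[of n] unfolding cont_def by blast
    have "\<forall>\<^sub>F t in at t0. op_norm (op_diff (alpha h t (s n)) (alpha h t0 (s n))) < e / 3"
      using order_tendstoD(2)[OF l2, of "e/3"] e by simp
    then show "\<forall>\<^sub>F t in at t0. dist (op_norm (op_diff (alpha h t T) (alpha h t0 T))) 0 < e"
    proof (rule eventually_mono)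
      fix t assume a: "op_norm (op_diff (alpha h t (s n)) (alpha h t0 (s n))) < e / 3"
      have b: "bounded_op (alpha h t T)" "bounded_op (alpha h t (s n))" "bounded_op (alpha h t0 (s n))" "bounded_op (alpha h t0 T)"
        by (intro alpha_bounded T sb)+
      have "op_norm (op_diff (alpha h t T) (alpha h t0 T)) \<le>
          op_norm (op_diff (alpha h t T) (alpha h t (s n))) + op_norm (op_diff (alpha h t (s n)) (alpha h t0 T))"
        by (rule op_norm_triangle[OF b(1,2,4)])
      also have "op_norm (op_diff (alpha h t (s n)) (alpha h t0 T)) \<le>
          op_norm (op_diff (alpha h t (s n)) (alpha h t0 (s n))) + op_norm (op_diff (alpha h t0 (s n)) (alpha h t0 T))"
        by (rule op_norm_triangle[OF b(2,3,4)])
      also have "op_norm (op_diff (alpha h t T) (alpha h t (s n))) \<le> op_norm (op_diff (s n) T)"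
        unfolding alpha_diff[OF T sb, symmetric] op_norm_diff_sym[OF T sb[of n]]
        by (metis alpha_norm bounded_op_diff(1) T sb op_norm_diff_sym)
      also have "op_norm (op_diff (alpha h t0 (s n)) (alpha h t0 T)) \<le> op_norm (op_diff (s n) T)"
        unfolding alpha_diff[OF sb T, symmetric] by (rule alpha_norm[OF bounded_op_diff(1)[OF sb T]])
      finally have "op_norm (op_diff (alpha h t T) (alpha h t0 T)) < e"
        using a n by simp
      then show "dist (op_norm (op_diff (alpha h t T) (alpha h t0 T))) 0 < e"
        using dnorm_nonneg[OF b(1,4)] by (simp add: dist_real_def)
    qed
  qed
qed

lemma cont_roe:
  assumes h: "born h" and T: "T \<in> uniform_roe"
  shows "cont h T"
proof -
  define C where "C = {T \<in> uniform_roe. cont h T}"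
  have "cstar_subalg C"
  proof (rule cstar_subalgI)
    show "C \<subseteq> {T. bounded_op T}" unfolding C_def using roe_bounded by blast
    show "op_zero \<in> C" unfolding C_def using cstar_zero[OF roe_cstar] cont_zero by blast
    show "op_add S T \<in> C" if "S \<in> C" "T \<in> C" for S T
      using that unfolding C_def using cstar_add[OF roe_cstar] cont_add roe_bounded by blast
    show "op_scale c T \<in> C" if "T \<in> C" for c T
      using that unfolding C_def using cstar_scale[OF roe_cstar] cont_scale roe_bounded by blast
    show "op_mult S T \<in> C" if "S \<in> C" "T \<in> C" for S T
      using that unfolding C_def using cstar_mult[OF roe_cstar] cont_mult roe_bounded by blast
    show "\<exists>S\<in>C. is_adjoint T S" if "T \<in> C" for T
    proof -
      have T: "T \<in> uniform_roe" "cont h T" using that unfolding C_def by auto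
      obtain S where S: "S \<in> uniform_roe" "is_adjoint T S" using cstar_adj[OF roe_cstar T(1)] by blast
      have "cont h S" by (rule cont_adj[OF roe_bounded[OF S(1)] roe_bounded[OF T(1)] S(2) T(2)])
      then show ?thesis using S unfolding C_def by blast
    qed
    show "T \<in> C" if "bounded_op T" "\<And>n. s n \<in> C" "(\<lambda>n. op_norm (op_diff (s n) T)) \<longlonglongrightarrow> 0" for T s
    proof -
      have s: "\<And>n. s n \<in> uniform_roe" "\<And>n. cont h (s n)" using that(2) unfolding C_def by auto
      have "T \<in> uniform_roe" using cstar_lim[OF roe_cstar that(1) s(1) that(3)] .
      moreover have "cont h T" using cont_lim[OF that(1) roe_bounded[OF s(1)] s(2) that(3)] .
      ultimately show ?thesis unfolding C_def by blast
    qed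
  qed
  moreover have "pts \<subseteq> C" unfolding C_def using pt_in_roe alpha_pt_cont[OF h] by blast
  ultimately show ?thesis using roe_sub T unfolding C_def by blast
qed


section \<open>Rank one operators\<close>

definition Pop :: "('a \<Rightarrow> complex) \<Rightarrow> 'a op" where
  "Pop \<xi> = (\<lambda>g. if g \<in> ell2 then (\<lambda>x. l2inner \<xi> g * \<xi> x) else (\<lambda>_. 0))"

lemma Pop_bounded:
  assumes xi: "\<xi> \<in> ell2"
  shows "bounded_op (Pop \<xi>)" "op_norm (Pop \<xi>) \<le> l2norm \<xi> * l2norm \<xi>"
proof -
  have b: "Pop \<xi> g \<in> ell2 \<and> l2norm (Pop \<xi> g) \<le> (l2norm \<xi> * l2norm \<xi>) * l2norm g" if g: "g \<in> ell2" for g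
  proof
    show "Pop \<xi> g \<in> ell2" using g xi by (simp add: Pop_def ell2_scale)
    have "l2norm (Pop \<xi> g) = cmod (l2inner \<xi> g) * l2norm \<xi>" using g by (simp add: Pop_def l2norm_scale)
    also have "\<dots> \<le> (l2norm \<xi> * l2norm g) * l2norm \<xi>"
      by (rule mult_right_mono[OF cauchy_schwarz[OF xi g] l2norm_nonneg])
    finally show "l2norm (Pop \<xi> g) \<le> (l2norm \<xi> * l2norm \<xi>) * l2norm g" by (simp add: algebra_simps)
  qed
  show "bounded_op (Pop \<xi>)"
  proof (rule bounded_opI[where K="l2norm \<xi> * l2norm \<xi>"])
    fix g h :: "'a \<Rightarrow> complex" and c assume g: "g \<in> ell2" and h: "h \<in> ell2"
    show "Pop \<xi> (\<lambda>x. g x + c * h x) = (\<lambda>x. Pop \<xi> g x + c * Pop \<xi> h x)"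
      using g h xi by (simp add: Pop_def ell2_lc l2inner_lin2 algebra_simps)
  qed (use b in \<open>auto simp: Pop_def\<close>)
  show "op_norm (Pop \<xi>) \<le> l2norm \<xi> * l2norm \<xi>"
    using b by (intro op_norm_le) (auto simp: l2norm_nonneg)
qed

lemma Pop_diff_norm:
  assumes xi: "\<xi> \<in> ell2" and ze: "\<zeta> \<in> ell2"
  shows "op_norm (op_diff (Pop \<zeta>) (Pop \<xi>)) \<le> (l2norm \<zeta> + l2norm \<xi>) * l2norm (\<lambda>x. \<zeta> x - \<xi> x)"
proof (rule op_norm_le)
  show "0 \<le> (l2norm \<zeta> + l2norm \<xi>) * l2norm (\<lambda>x. \<zeta> x - \<xi> x)" by (simp add: l2norm_nonneg)
next
  fix g :: "'a \<Rightarrow> complex" assume g: "g \<in> ell2"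
  define d where "d = (\<lambda>x. \<zeta> x - \<xi> x)"
  have d: "d \<in> ell2" unfolding d_def by (rule ell2_diff[OF ze xi])
  have "op_diff (Pop \<zeta>) (Pop \<xi>) g = (\<lambda>x. l2inner \<zeta> g * d x + l2inner d g * \<xi> x)"
  proof -
    have e: "l2inner (\<lambda>x. \<zeta> x - \<xi> x) g = l2inner \<zeta> g - l2inner \<xi> g" by (rule l2inner_diff1[OF ze xi g])
    show ?thesis using g by (simp add: op_diff_def Pop_def d_def e algebra_simps)
  qed
  then have "l2norm (op_diff (Pop \<zeta>) (Pop \<xi>) g) \<le> cmod (l2inner \<zeta> g) * l2norm d + cmod (l2inner d g) * l2norm \<xi>"
    using ell2_lincomb[OF d xi, of "l2inner \<zeta> g" "l2inner d g"] by simp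
  also have "\<dots> \<le> (l2norm \<zeta> * l2norm g) * l2norm d + (l2norm d * l2norm g) * l2norm \<xi>"
    by (intro add_mono mult_right_mono cauchy_schwarz ze d g l2norm_nonneg)
  finally show "l2norm (op_diff (Pop \<zeta>) (Pop \<xi>) g) \<le> (l2norm \<zeta> + l2norm \<xi>) * l2norm (\<lambda>x. \<zeta> x - \<xi> x) * l2norm g"
    unfolding d_def by (simp add: algebra_simps)
qed

lemma inv_into_singleton: "inv_into {b} (\<lambda>_. a) a = b"
proof -
  have "inv_into {b} (\<lambda>_. a) a \<in> {b}" by (rule inv_into_into) simp
  then show ?thesis by simp
qed

lemma pt_unit: "g \<in> ell2 \<Longrightarrow> pt_op {b} (\<lambda>_. a) g x = (if x = a then g b else 0)"
  by (cases "x = a") (simp_all add: pt_op_def inv_into_singleton)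

lemma pt_unit_pt: "partial_translation {b} (\<lambda>_. a)"
  unfolding partial_translation_def by auto

lemma l2inner_restrict:
  assumes F: "finite F" and g: "g \<in> ell2"
  shows "l2inner (\<lambda>x. if x \<in> F then \<xi> x else 0) g = (\<Sum>b\<in>F. cnj (\<xi> b) * g b)"
  unfolding restrict_as_sum[OF F] using F g by (simp add: l2inner_sum1 l2inner_delta1)

lemma Pop_finite_roe:
  assumes F: "finite F"
  shows "Pop (\<lambda>x. if x \<in> F then \<xi> x else 0) \<in> uniform_roe"
proof -
  have e: "Pop (\<lambda>x. if x \<in> F then \<xi> x else 0) = opsum (F \<times> F) (\<lambda>(a,b). \<xi> a * cnj (\<xi> b)) (\<lambda>(a,b). pt_op {b} (\<lambda>_. a))"
  proof
    fix g
    show "Pop (\<lambda>x. if x \<in> F then \<xi> x else 0) g = opsum (F \<times> F) (\<lambda>(a,b). \<xi> a * cnj (\<xi> b)) (\<lambda>(a,b). pt_op {b} (\<lambda>_. a)) g"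
    proof (cases "g \<in> ell2")
      case False then show ?thesis by (simp add: Pop_def opsum_def pt_op_def split_def)
    next
      case g: True
      show ?thesis
      proof
        fix x
        have "opsum (F \<times> F) (\<lambda>(a,b). \<xi> a * cnj (\<xi> b)) (\<lambda>(a,b). pt_op {b} (\<lambda>_. a)) g x
            = (\<Sum>(a,b)\<in>F \<times> F. \<xi> a * cnj (\<xi> b) * (if x = a then g b else 0))"
          unfolding opsum_def using g by (simp add: split_def pt_unit)
        also have "\<dots> = (\<Sum>a\<in>F. \<Sum>b\<in>F. \<xi> a * cnj (\<xi> b) * (if x = a then g b else 0))"
          by (rule sum.cartesian_product[symmetric])
        also have "\<dots> = (\<Sum>a\<in>F. if x = a then \<xi> a * (\<Sum>b\<in>F. cnj (\<xi> b) * g b) else 0)"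
          by (rule sum.cong) (auto simp: sum_distrib_left algebra_simps)
        also have "\<dots> = (if x \<in> F then \<xi> x * (\<Sum>b\<in>F. cnj (\<xi> b) * g b) else 0)"
          using F by (simp add: sum.delta)
        also have "\<dots> = Pop (\<lambda>x. if x \<in> F then \<xi> x else 0) g x"
          using g by (simp add: Pop_def l2inner_restrict[OF F g] mult.commute)
        finally show "Pop (\<lambda>x. if x \<in> F then \<xi> x else 0) g x = opsum (F \<times> F) (\<lambda>(a,b). \<xi> a * cnj (\<xi> b)) (\<lambda>(a,b). pt_op {b} (\<lambda>_. a)) g x" ..
      qed
    qed
  qed
  show ?thesis unfolding e
  proof (rule opsum_in[OF roe_cstar])
    show "finite (F \<times> F)" using F by simp
    fix k :: "'a \<times> 'a"
    show "(case k of (a, b) \<Rightarrow> pt_op {b} (\<lambda>_. a)) \<in> uniform_roe"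
      by (cases k) (simp add: pt_in_roe pt_unit_pt)
  qed
qed

lemma Pop_roe:
  assumes xi: "\<xi> \<in> ell2" and F: "\<And>n. finite (F n)"
    and l: "(\<lambda>n. l2norm (\<lambda>x. \<xi> x - (if x \<in> F n then \<xi> x else 0))) \<longlonglongrightarrow> 0"
  shows "Pop \<xi> \<in> uniform_roe"
proof (rule cstar_lim[OF roe_cstar Pop_bounded(1)[OF xi]])
  define s where "s = (\<lambda>n. Pop (\<lambda>x. if x \<in> F n then \<xi> x else 0))"
  show "\<And>n. s n \<in> uniform_roe" unfolding s_def using Pop_finite_roe F by blast
  show "(\<lambda>n. op_norm (op_diff (s n) (Pop \<xi>))) \<longlonglongrightarrow> 0"
  proof (rule Lim_null_comparison)
    have "(\<lambda>n. (l2norm \<xi> + l2norm \<xi>) * l2norm (\<lambda>x. \<xi> x - (if x \<in> F n then \<xi> x else 0))) \<longlonglongrightarrow> (l2norm \<xi> + l2norm \<xi>) * 0"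
      by (intro tendsto_intros l)
    then show "(\<lambda>n. (l2norm \<xi> + l2norm \<xi>) * l2norm (\<lambda>x. \<xi> x - (if x \<in> F n then \<xi> x else 0))) \<longlonglongrightarrow> 0" by simp
    show "\<forall>\<^sub>F n in sequentially. norm (op_norm (op_diff (s n) (Pop \<xi>))) \<le> (l2norm \<xi> + l2norm \<xi>) * l2norm (\<lambda>x. \<xi> x - (if x \<in> F n then \<xi> x else 0))"
    proof (intro always_eventually allI)
      fix n
      define z where "z = (\<lambda>x. if x \<in> F n then \<xi> x else 0)"
      have z: "z \<in> ell2" unfolding z_def by (rule ell2_restrict2[OF xi])
      have zn: "l2norm z \<le> l2norm \<xi>"
      proof -
        have "z \<in> ell2 \<and> l2norm z \<le> l2norm \<xi>"
        proof (rule ell2_I')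
          fix G :: "'a set" assume G: "finite G"
          have "(\<Sum>x\<in>G. (cmod (z x))\<^sup>2) \<le> (\<Sum>x\<in>G. (cmod (\<xi> x))\<^sup>2)"
            by (rule sum_mono) (simp add: z_def)
          then show "sqrt (\<Sum>x\<in>G. (cmod (z x))\<^sup>2) \<le> l2norm \<xi>"
            using finite_le_l2norm[OF xi G] by (meson order_trans real_sqrt_le_mono)
        qed
        then show ?thesis by blast
      qed
      have "op_norm (op_diff (Pop z) (Pop \<xi>)) \<le> (l2norm z + l2norm \<xi>) * l2norm (\<lambda>x. z x - \<xi> x)"
        by (rule Pop_diff_norm[OF xi z])
      also have "\<dots> \<le> (l2norm \<xi> + l2norm \<xi>) * l2norm (\<lambda>x. z x - \<xi> x)"
        using zn by (intro mult_right_mono l2norm_nonneg) auto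
      also have "l2norm (\<lambda>x. z x - \<xi> x) = l2norm (\<lambda>x. \<xi> x - z x)" by (rule l2norm_minus_sym)
      finally have "op_norm (op_diff (Pop z) (Pop \<xi>)) \<le> (l2norm \<xi> + l2norm \<xi>) * l2norm (\<lambda>x. \<xi> x - z x)" .
      moreover have "0 \<le> op_norm (op_diff (Pop z) (Pop \<xi>))"
        by (intro op_norm_nonneg bounded_op_diff Pop_bounded z xi)
      ultimately show "norm (op_norm (op_diff (s n) (Pop \<xi>))) \<le> (l2norm \<xi> + l2norm \<xi>) * l2norm (\<lambda>x. \<xi> x - (if x \<in> F n then \<xi> x else 0))"
        unfolding s_def z_def by simp
    qed
  qed
qed

section \<open>The reflection W\<close>

definition Wop :: "('a \<Rightarrow> complex) \<Rightarrow> 'a op" where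
  "Wop \<xi> = (\<lambda>g. if g \<in> ell2 then (\<lambda>x. g x - complex_of_real (2 / nsq \<xi>) * l2inner \<xi> g * \<xi> x) else (\<lambda>_. 0))"

lemma Id_pt: "g \<in> ell2 \<Longrightarrow> pt_op UNIV id g = g"
  by (simp add: pt_op_def)

lemma Id_pt_pt: "partial_translation UNIV id"
  unfolding partial_translation_def by auto

lemma Wop_eq: "Wop \<xi> = op_diff (pt_op UNIV id) (op_scale (complex_of_real (2 / nsq \<xi>)) (Pop \<xi>))"
  by (auto simp: Wop_def op_diff_def op_scale_def Pop_def pt_op_def fun_eq_iff)

lemma Wop_roe:
  assumes "Pop \<xi> \<in> uniform_roe"
  shows "Wop \<xi> \<in> uniform_roe"
  unfolding Wop_eq
  by (intro cstar_diff[OF roe_cstar] cstar_scale[OF roe_cstar] pt_in_roe Id_pt_pt assms)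

lemma Wop_upair:
  assumes xi: "\<xi> \<in> ell2" and pos: "nsq \<xi> > 0"
  shows "upair (Wop \<xi>) (Wop \<xi>)"
proof -
  define k where "k = complex_of_real (2 / nsq \<xi>)"
  have kc: "cnj k = k" unfolding k_def by simp
  have kk: "k * complex_of_real (nsq \<xi>) = 2" unfolding k_def using pos
    by (simp flip: of_real_mult)
  have W: "Wop \<xi> g = (\<lambda>x. g x - k * l2inner \<xi> g * \<xi> x)" if "g \<in> ell2" for g
    using that by (simp add: Wop_def k_def)
  have Wl: "(\<lambda>x. g x - k * l2inner \<xi> g * \<xi> x) \<in> ell2" if "g \<in> ell2" for g
    using ell2_lincomb[OF that xi, of 1 "- (k * l2inner \<xi> g)"] by (simp add: algebra_simps)
  have b: "bounded_op (Wop \<xi>)"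
  proof (rule bounded_opI[where K="1 + cmod k * (l2norm \<xi> * l2norm \<xi>)"])
    fix g h :: "'a \<Rightarrow> complex" and c assume g: "g \<in> ell2" and h: "h \<in> ell2"
    show "Wop \<xi> (\<lambda>x. g x + c * h x) = (\<lambda>x. Wop \<xi> g x + c * Wop \<xi> h x)"
      using g h xi by (simp add: W ell2_lc l2inner_lin2 algebra_simps)
  next
    fix g :: "'a \<Rightarrow> complex" assume g: "g \<in> ell2"
    show "Wop \<xi> g \<in> ell2" using W[OF g] Wl[OF g] by simp
    have "l2norm (Wop \<xi> g) \<le> cmod 1 * l2norm g + cmod (- (k * l2inner \<xi> g)) * l2norm \<xi>"
      using ell2_lincomb[OF g xi, of 1 "- (k * l2inner \<xi> g)"] W[OF g] by (simp add: algebra_simps)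
    also have "\<dots> \<le> 1 * l2norm g + (cmod k * (l2norm \<xi> * l2norm g)) * l2norm \<xi>"
      by (simp add: norm_mult) (intro mult_right_mono mult_left_mono cauchy_schwarz xi g l2norm_nonneg norm_ge_zero)
    finally show "l2norm (Wop \<xi> g) \<le> (1 + cmod k * (l2norm \<xi> * l2norm \<xi>)) * l2norm g"
      by (simp add: algebra_simps)
  next
    fix g :: "'a \<Rightarrow> complex" assume "g \<notin> ell2" then show "Wop \<xi> g = (\<lambda>_. 0)" by (simp add: Wop_def)
  qed
  have inv: "\<forall>g\<in>ell2. Wop \<xi> (Wop \<xi> g) = g"
  proof
    fix g :: "'a \<Rightarrow> complex" assume g: "g \<in> ell2"
    have "l2inner \<xi> (\<lambda>x. g x - k * l2inner \<xi> g * \<xi> x) = l2inner \<xi> g - k * l2inner \<xi> g * l2inner \<xi> \<xi>"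
      using l2inner_lin2[OF xi g xi, of "- (k * l2inner \<xi> g)"] by (simp add: algebra_simps)
    also have "\<dots> = - l2inner \<xi> g" using kk by (simp add: l2inner_self[OF xi] algebra_simps)
    finally have e: "l2inner \<xi> (\<lambda>x. g x - k * l2inner \<xi> g * \<xi> x) = - l2inner \<xi> g" .
    show "Wop \<xi> (Wop \<xi> g) = g" using W[OF g] W[OF Wl[OF g]] e by simp
  qed
  have adj: "is_adjoint (Wop \<xi>) (Wop \<xi>)"
    unfolding is_adjoint_def
  proof (intro ballI)
    fix g h :: "'a \<Rightarrow> complex" assume g: "g \<in> ell2" and h: "h \<in> ell2"
    have "l2inner (Wop \<xi> g) h = l2inner g h - cnj (k * l2inner \<xi> g) * l2inner \<xi> h"
      using l2inner_lin1[OF g xi h, of "- (k * l2inner \<xi> g)"] W[OF g] by (simp add: algebra_simps)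
    also have "\<dots> = l2inner g h - k * l2inner g \<xi> * l2inner \<xi> h"
      using l2inner_cnj[OF xi g] kc by simp
    also have "\<dots> = l2inner g (Wop \<xi> h)"
      using l2inner_lin2[OF g h xi, of "- (k * l2inner \<xi> h)"] W[OF h] by (simp add: algebra_simps)
    finally show "l2inner (Wop \<xi> g) h = l2inner g (Wop \<xi> h)" .
  qed
  show ?thesis unfolding upair_def using b inv adj by blast
qed


section \<open>A far-away sequence\<close>

lemma far_point:
  fixes x0 :: "'a::metric_space"
  assumes ulf: "uniformly_locally_finite TYPE('a)" and inf: "infinite (UNIV :: 'a set)"
  shows "\<exists>p::'a. dist p x0 > r"
proof -
  define r' where "r' = \<bar>r\<bar> + 1"
  have r': "r' > 0" unfolding r'_def by simp
  obtain N :: nat where "\<forall>x::'a. finite (cball x r') \<and> card (cball x r') \<le> N"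
    using ulf r' unfolding uniformly_locally_finite_def by blast
  then have fin: "finite (cball x0 r')" by blast
  have "UNIV \<noteq> cball x0 r'" using fin inf by metis
  then obtain p where "p \<notin> cball x0 r'" by blast
  then have "dist x0 p > r'" by (simp add: not_le)
  then have "dist p x0 > r" unfolding r'_def by (simp add: dist_commute)
  then show ?thesis by blast
qed

primrec seqp :: "'a::metric_space \<Rightarrow> nat \<Rightarrow> 'a" where
  "seqp x0 0 = x0"
| "seqp x0 (Suc n) = (SOME p. dist p x0 > 4 ^ (Suc n) + dist (seqp x0 n) x0)"

context
  fixes x0 :: "'a::metric_space"
  assumes ulf: "uniformly_locally_finite TYPE('a)" and inf: "infinite (UNIV :: 'a set)"
begin

lemma seqp_step: "dist (seqp x0 (Suc n)) x0 > 4 ^ (Suc n) + dist (seqp x0 n) x0"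
proof -
  have "\<exists>p. dist p x0 > 4 ^ (Suc n) + dist (seqp x0 n) x0" by (rule far_point[OF ulf inf])
  then show ?thesis unfolding seqp.simps by (rule someI_ex)
qed

lemma seqp_ge: "n \<ge> 1 \<Longrightarrow> dist (seqp x0 n) x0 > 4 ^ n"
proof (cases n)
  case (Suc m)
  have a: "dist (seqp x0 (Suc m)) x0 > 4 ^ (Suc m) + dist (seqp x0 m) x0" by (rule seqp_step)
  have b: "0 \<le> dist (seqp x0 m) x0" by simp
  from a b show ?thesis unfolding Suc by linarith
qed simp

lemma seqp_mono: "m < n \<Longrightarrow> dist (seqp x0 m) x0 < dist (seqp x0 n) x0"
proof (induction n)
  case 0 then show ?case by simp
next
  case (Suc n)
  have "dist (seqp x0 n) x0 < dist (seqp x0 (Suc n)) x0"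
    using seqp_step[of n] by (smt (verit) zero_less_power)
  then show ?case using Suc by (cases "m = n") auto
qed

lemma seqp_inj: "inj (seqp x0)"
proof (rule injI)
  fix m n assume e: "seqp x0 m = seqp x0 n"
  show "m = n"
  proof (rule ccontr)
    assume "m \<noteq> n"
    then have "m < n \<or> n < m" by arith
    then show False using seqp_mono e by fastforce
  qed
qed

end

definition hx :: "'a::metric_space \<Rightarrow> 'a \<Rightarrow> int" where
  "hx x0 x = floor (dist x x0)"

lemma born_hx: "born (hx x0)"
  unfolding born_def
proof
  fix R :: real
  show "\<exists>M. \<forall>x y. dist x y \<le> R \<longrightarrow> \<bar>hx x0 x - hx x0 y\<bar> \<le> M"
  proof (intro exI allI impI)
    fix x y :: 'a assume d: "dist x y \<le> R"
    have t1: "dist x x0 \<le> dist x y + dist y x0" by (rule dist_triangle)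
    have t2: "dist y x0 \<le> dist x y + dist x x0" by (metis dist_commute dist_triangle)
    have f1: "of_int (hx x0 x) \<le> dist x x0" "dist x x0 < of_int (hx x0 x) + 1" unfolding hx_def by linarith+
    have f2: "of_int (hx x0 y) \<le> dist y x0" "dist y x0 < of_int (hx x0 y) + 1" unfolding hx_def by linarith+
    have c: "R \<le> of_int (ceiling R)" by (rule le_of_int_ceiling)
    have "of_int \<bar>hx x0 x - hx x0 y\<bar> < of_int (ceiling R) + (1::real)"
      using t1 t2 f1 f2 c d by (simp add: abs_if) linarith
    then show "\<bar>hx x0 x - hx x0 y\<bar> \<le> ceiling R + 1" by linarith
  qed
qed

lemma half_sq: "(cmod (complex_of_real ((1/2) ^ k)))\<^sup>2 = (1/4::real) ^ k"
proof -
  have "((1/2::real) ^ k)\<^sup>2 = (1/4) ^ k"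
    by (simp add: power2_eq_square power_mult_distrib[symmetric])
  then show ?thesis by (simp only: norm_of_real power2_abs)
qed

definition xi :: "'a::metric_space \<Rightarrow> 'a \<Rightarrow> complex" where
  "xi x0 x = (if x \<in> range (seqp x0) then complex_of_real ((1/2) ^ (inv (seqp x0) x)) else 0)"

context
  fixes x0 :: "'a::metric_space"
  assumes ulf: "uniformly_locally_finite TYPE('a)" and inf: "infinite (UNIV :: 'a set)"
begin

lemma xi_seqp: "xi x0 (seqp x0 k) = complex_of_real ((1/2) ^ k)"
  unfolding xi_def using seqp_inj[OF ulf inf] by (simp add: inv_f_f)

lemma xi_has_sum: "((\<lambda>x. (cmod (xi x0 x))\<^sup>2) has_sum (4/3)) UNIV"
proof -
  have g: "(\<lambda>k::nat. (1/4::real) ^ k) sums (1 / (1 - 1/4))" by (rule geometric_sums) simp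
  have "((\<lambda>k::nat. (1/4::real) ^ k) has_sum (4/3)) UNIV"
    using sums_nonneg_imp_has_sum[OF g] by simp
  moreover have "(\<lambda>k. (cmod (xi x0 (seqp x0 k)))\<^sup>2) = (\<lambda>k::nat. (1/4::real) ^ k)"
    by (simp only: xi_seqp half_sq)
  ultimately have "(((\<lambda>x. (cmod (xi x0 x))\<^sup>2) \<circ> seqp x0) has_sum (4/3)) UNIV" by (simp add: comp_def)
  then have "((\<lambda>x. (cmod (xi x0 x))\<^sup>2) has_sum (4/3)) (range (seqp x0))"
    using has_sum_reindex[OF inj_on_subset[OF seqp_inj[OF ulf inf] subset_UNIV]] by blast
  then show ?thesis
    by (rule has_sum_cong_neutral[THEN iffD1, rotated -1]) (auto simp: xi_def)
qed

lemma xi_ell2: "xi x0 \<in> ell2"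
  using xi_has_sum unfolding ell2_def summable_on_def by blast

lemma nsq_xi: "nsq (xi x0) = 4/3"
  unfolding nsq_def using xi_has_sum by (simp add: infsumI)

lemma xi_approx:
  "(\<lambda>n. l2norm (\<lambda>x. xi x0 x - (if x \<in> seqp x0 ` {..<n} then xi x0 x else 0))) \<longlonglongrightarrow> 0"
proof -
  have e: "l2norm (\<lambda>x. xi x0 x - (if x \<in> seqp x0 ` {..<n} then xi x0 x else 0)) = sqrt (4/3 - (\<Sum>k<n. (1/4::real) ^ k))" for n
  proof -
    have "(\<lambda>x. xi x0 x - (if x \<in> seqp x0 ` {..<n} then xi x0 x else 0)) = (\<lambda>x. if x \<in> seqp x0 ` {..<n} then 0 else xi x0 x)"
      by auto
    moreover have "(\<Sum>x\<in>seqp x0 ` {..<n}. (cmod (xi x0 x))\<^sup>2) = (\<Sum>k<n. (1/4::real) ^ k)"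
    proof -
      have "(\<Sum>x\<in>seqp x0 ` {..<n}. (cmod (xi x0 x))\<^sup>2) = (\<Sum>k<n. (cmod (xi x0 (seqp x0 k)))\<^sup>2)"
        by (rule sum.reindex[unfolded comp_def]) (rule inj_on_subset[OF seqp_inj[OF ulf inf] subset_UNIV])
      also have "\<dots> = (\<Sum>k<n. (1/4::real) ^ k)"
        by (simp only: xi_seqp half_sq)
      finally show ?thesis .
    qed
    ultimately show ?thesis using nsq_tail[OF xi_ell2, of "seqp x0 ` {..<n}"] by (simp add: l2norm_nsq nsq_xi)
  qed
  have g: "(\<lambda>k::nat. (1/4::real) ^ k) sums (4/3)"
    using geometric_sums[of "1/4::real"] by simp
  then have "(\<lambda>n. \<Sum>k<n. (1/4::real) ^ k) \<longlonglongrightarrow> 4/3" by (simp add: sums_def)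
  then have "(\<lambda>n. sqrt (4/3 - (\<Sum>k<n. (1/4::real) ^ k))) \<longlonglongrightarrow> sqrt (4/3 - 4/3)"
    by (intro tendsto_intros)
  then show ?thesis unfolding e by simp
qed

lemma Pop_xi_roe: "Pop (xi x0) \<in> uniform_roe"
  by (rule Pop_roe[OF xi_ell2 _ xi_approx]) simp

lemma W_roe: "Wop (xi x0) \<in> uniform_roe"
  by (rule Wop_roe[OF Pop_xi_roe])

lemma W_upair: "upair (Wop (xi x0)) (Wop (xi x0))"
  by (rule Wop_upair[OF xi_ell2]) (simp add: nsq_xi)

end


definition sig :: "'a::metric_space \<Rightarrow> real \<Rightarrow> 'a op \<Rightarrow> 'a op" where
  "sig x0 t T = Ad (Wop (xi x0)) (Wop (xi x0)) (alpha (hx x0) t (Ad (Wop (xi x0)) (Wop (xi x0)) T))"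

lemma alpha_inv: "bounded_op X \<Longrightarrow> alpha h (-t) (alpha h t X) = X"
  unfolding alpha_def using Ad_inv[OF uu_upair, of X h t] by simp

lemma alpha_comp: "alpha h s (alpha h t X) = alpha h (s + t) X"
proof -
  have e1: "op_mult (uu h s) (uu h t) = uu h (s + t)" by (simp add: op_mult_def uu_comp fun_eq_iff)
  have e2: "op_mult (uu h (-t)) (uu h (-s)) = uu h (-(s + t))"
    by (simp add: op_mult_def uu_comp fun_eq_iff algebra_simps)
  show ?thesis unfolding alpha_def Ad_comp e1 e2 ..
qed

context
  fixes x0 :: "'a::metric_space"
  assumes ulf: "uniformly_locally_finite TYPE('a)" and inf: "infinite (UNIV :: 'a set)"
begin

lemma WW: "upair (Wop (xi x0)) (Wop (xi x0))" by (rule W_upair[OF ulf inf])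

lemma Wb: "bounded_op (Wop (xi x0))" using WW unfolding upair_def by blast

lemma AdW_roe: "T \<in> uniform_roe \<Longrightarrow> Ad (Wop (xi x0)) (Wop (xi x0)) T \<in> uniform_roe"
proof -
  assume T: "T \<in> uniform_roe"
  have "Ad (Wop (xi x0)) (Wop (xi x0)) T = op_mult (Wop (xi x0)) (op_mult T (Wop (xi x0)))"
    by (simp add: Ad_def op_mult_def)
  then show ?thesis using T W_roe[OF ulf inf] by (simp add: cstar_mult[OF roe_cstar])
qed

lemma sig_roe: "T \<in> uniform_roe \<Longrightarrow> sig x0 t T \<in> uniform_roe"
  unfolding sig_def by (intro AdW_roe alpha_roe[OF born_hx])

definition VV :: "real \<Rightarrow> 'a op" where
  "VV t = op_mult (Wop (xi x0)) (op_mult (uu (hx x0) t) (Wop (xi x0)))"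

lemma sig_Ad: "sig x0 t T = Ad (VV t) (VV (-t)) T"
  by (simp add: sig_def VV_def Ad_def alpha_def op_mult_def)

lemma VV_upair: "upair (VV t) (VV (-t))"
proof -
  have "upair (op_mult (Wop (xi x0)) (op_mult (uu (hx x0) t) (Wop (xi x0)))) (op_mult (op_mult (Wop (xi x0)) (uu (hx x0) (-t))) (Wop (xi x0)))"
    by (rule upair_comp[OF WW upair_comp[OF uu_upair WW]])
  moreover have "op_mult (op_mult (Wop (xi x0)) (uu (hx x0) (-t))) (Wop (xi x0)) = VV (-t)"
    by (simp add: VV_def op_mult_def)
  ultimately show ?thesis by (simp add: VV_def)
qed

lemma sig_inv: "bounded_op T \<Longrightarrow> sig x0 (-t) (sig x0 t T) = T"
proof -
  assume T: "bounded_op T"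
  have b1: "bounded_op (Ad (Wop (xi x0)) (Wop (xi x0)) T)" by (rule Ad_bounded(1)[OF WW T])
  have b2: "bounded_op (alpha (hx x0) t (Ad (Wop (xi x0)) (Wop (xi x0)) T))" by (rule alpha_bounded[OF b1])
  show ?thesis unfolding sig_def Ad_inv[OF WW b2] alpha_inv[OF b1] Ad_inv[OF WW T] ..
qed

lemma sig_group: "bounded_op T \<Longrightarrow> sig x0 (s + t) T = sig x0 s (sig x0 t T)"
proof -
  assume T: "bounded_op T"
  have b1: "bounded_op (Ad (Wop (xi x0)) (Wop (xi x0)) T)" by (rule Ad_bounded(1)[OF WW T])
  have b2: "bounded_op (alpha (hx x0) t (Ad (Wop (xi x0)) (Wop (xi x0)) T))" by (rule alpha_bounded[OF b1])
  show ?thesis unfolding sig_def Ad_inv[OF WW b2] alpha_comp ..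
qed

lemma sig_0: "bounded_op T \<Longrightarrow> sig x0 0 T = T"
proof -
  assume T: "bounded_op T"
  have b1: "bounded_op (Ad (Wop (xi x0)) (Wop (xi x0)) T)" by (rule Ad_bounded(1)[OF WW T])
  show ?thesis unfolding sig_def alpha_0[OF b1] Ad_inv[OF WW T] ..
qed

lemma sig_aut: "star_automorphism uniform_roe (sig x0 t)"
  unfolding star_automorphism_def
proof (intro conjI ballI allI impI)
  show "bij_betw (sig x0 t) uniform_roe uniform_roe"
  proof (rule bij_betw_byWitness[where f'="sig x0 (-t)"])
    show "\<forall>a\<in>uniform_roe. sig x0 (- t) (sig x0 t a) = a" using sig_inv roe_bounded by blast
    show "\<forall>a'\<in>uniform_roe. sig x0 t (sig x0 (- t) a') = a'"
      using sig_inv[of _ "-t"] roe_bounded by (metis minus_minus)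
    show "sig x0 t ` uniform_roe \<subseteq> uniform_roe" using sig_roe by blast
    show "sig x0 (- t) ` uniform_roe \<subseteq> uniform_roe" using sig_roe by blast
  qed
next
  fix S T :: "'a op" assume S: "S \<in> uniform_roe" and T: "T \<in> uniform_roe"
  show "sig x0 t (op_add S T) = op_add (sig x0 t S) (sig x0 t T)"
    unfolding sig_Ad by (rule Ad_add[OF VV_upair roe_bounded[OF S] roe_bounded[OF T]])
  show "sig x0 t (op_mult S T) = op_mult (sig x0 t S) (sig x0 t T)"
    unfolding sig_Ad by (rule Ad_mult[OF VV_upair roe_bounded[OF S] roe_bounded[OF T]])
  assume a: "is_adjoint T S"
  show "is_adjoint (sig x0 t T) (sig x0 t S)"
    unfolding sig_Ad by (rule Ad_adjoint[OF VV_upair roe_bounded[OF S] roe_bounded[OF T] a])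
next
  fix c and T :: "'a op" assume T: "T \<in> uniform_roe"
  show "sig x0 t (op_scale c T) = op_scale c (sig x0 t T)"
    unfolding sig_Ad by (rule Ad_scale[OF VV_upair roe_bounded[OF T]])
qed

lemma sig_cont:
  assumes T: "T \<in> uniform_roe"
  shows "((\<lambda>t. op_norm (op_diff (sig x0 t T) (sig x0 t0 T))) \<longlongrightarrow> 0) (at t0)"
proof -
  define X where "X = Ad (Wop (xi x0)) (Wop (xi x0)) T"
  have X: "X \<in> uniform_roe" unfolding X_def by (rule AdW_roe[OF T])
  have Xb: "bounded_op X" by (rule roe_bounded[OF X])
  have c: "((\<lambda>t. op_norm (op_diff (alpha (hx x0) t X) (alpha (hx x0) t0 X))) \<longlongrightarrow> 0) (at t0)"
    using cont_roe[OF born_hx X] unfolding cont_def by blast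
  show ?thesis
  proof (rule Lim_null_comparison[OF _ c], intro always_eventually allI)
    fix t
    have b: "bounded_op (alpha (hx x0) t X)" "bounded_op (alpha (hx x0) t0 X)" by (intro alpha_bounded Xb)+
    have "op_diff (sig x0 t T) (sig x0 t0 T) = Ad (Wop (xi x0)) (Wop (xi x0)) (op_diff (alpha (hx x0) t X) (alpha (hx x0) t0 X))"
      unfolding sig_def X_def[symmetric] by (rule Ad_diff[OF WW b, symmetric])
    moreover have "op_norm (Ad (Wop (xi x0)) (Wop (xi x0)) (op_diff (alpha (hx x0) t X) (alpha (hx x0) t0 X))) \<le> op_norm (op_diff (alpha (hx x0) t X) (alpha (hx x0) t0 X))"
      by (rule Ad_bounded(2)[OF WW bounded_op_diff(1)[OF b]])
    moreover have "0 \<le> op_norm (op_diff (sig x0 t T) (sig x0 t0 T))"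
      using sig_roe[OF T] by (intro op_norm_nonneg bounded_op_diff roe_bounded)
    ultimately show "norm (op_norm (op_diff (sig x0 t T) (sig x0 t0 T))) \<le> op_norm (op_diff (alpha (hx x0) t X) (alpha (hx x0) t0 X))"
      by simp
  qed
qed

lemma sig_flow: "is_flow uniform_roe (sig x0)"
  unfolding is_flow_def
  using sig_aut sig_0 sig_group sig_cont roe_bounded by blast

end


lemma cis_dq:
  "((\<lambda>s. complex_of_real (1/s) * (cis ((t0 + s) * a) - cis (t0 * a))) \<longlongrightarrow> \<i> * complex_of_real a * cis (t0 * a)) (at (0::real))"
proof -
  define L where "L = \<i> * complex_of_real a * cis (t0 * a)"
  have hd: "((\<lambda>s. cis ((t0 + s) * a)) has_derivative (\<lambda>t. (t * a) *\<^sub>R (\<i> * cis ((t0 + 0) * a)))) (at 0)"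
    by (rule has_derivative_cis) (auto intro!: derivative_eq_intros)
  then have lim: "((\<lambda>y. norm ((cis ((t0 + y) * a) - cis ((t0 + 0) * a)) - ((y - 0) * a) *\<^sub>R (\<i> * cis ((t0 + 0) * a))) / norm (y - 0)) \<longlongrightarrow> 0) (at 0)"
    unfolding has_derivative_iff_norm by blast
  have ev: "\<forall>\<^sub>F s in at (0::real). s \<noteq> 0" by (simp add: eventually_at_filter)
  have "((\<lambda>s. norm (complex_of_real (1/s) * (cis ((t0 + s) * a) - cis (t0 * a)) - L)) \<longlongrightarrow> 0) (at 0)"
  proof (rule Lim_transform_eventually[OF lim])
    show "\<forall>\<^sub>F y in at 0. norm ((cis ((t0 + y) * a) - cis ((t0 + 0) * a)) - ((y - 0) * a) *\<^sub>R (\<i> * cis ((t0 + 0) * a))) / norm (y - 0)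
        = norm (complex_of_real (1/y) * (cis ((t0 + y) * a) - cis (t0 * a)) - L)"
    proof (rule eventually_mono[OF ev])
      fix s :: real assume s: "s \<noteq> 0"
      have "complex_of_real (1/s) * (cis ((t0 + s) * a) - cis (t0 * a)) - L
          = ((cis ((t0 + s) * a) - cis (t0 * a)) - complex_of_real s * L) / complex_of_real s"
        using s by (simp add: field_simps)
      moreover have "((s - 0) * a) *\<^sub>R (\<i> * cis ((t0 + 0) * a)) = complex_of_real s * L"
        by (simp add: L_def scaleR_conv_of_real algebra_simps)
      ultimately show "norm ((cis ((t0 + s) * a) - cis ((t0 + 0) * a)) - ((s - 0) * a) *\<^sub>R (\<i> * cis ((t0 + 0) * a))) / norm (s - 0)
        = norm (complex_of_real (1/s) * (cis ((t0 + s) * a) - cis (t0 * a)) - L)"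
        by (simp add: norm_divide)
    qed
  qed
  then have "((\<lambda>s. complex_of_real (1/s) * (cis ((t0 + s) * a) - cis (t0 * a)) - L) \<longlongrightarrow> 0) (at 0)"
    by (simp only: tendsto_norm_zero_iff)
  then show ?thesis unfolding L_def[symmetric] by (rule LIM_zero_cancel)
qed

lemma entry_bound: "bounded_op X \<Longrightarrow> cmod (X (delta w) y) \<le> op_norm X"
proof -
  assume X: "bounded_op X"
  have "cmod (X (delta w) y) \<le> l2norm (X (delta w))" by (rule coord_le_l2norm[OF bop_ell2[OF X]])
  also have "\<dots> \<le> op_norm X * l2norm (delta w)" by (rule bop_bound[OF X ell2_delta])
  finally show ?thesis by simp
qed

lemma pt_single_id: "g \<in> ell2 \<Longrightarrow> pt_op {z} id g = (\<lambda>x. g z * delta z x)"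
proof -
  assume g: "g \<in> ell2"
  have "inv_into {z} id z = z" using inv_into_f_f[of id "{z}" z] by simp
  then show ?thesis using g by (auto simp: pt_op_def delta_def fun_eq_iff)
qed

lemma pt_single_pt: "partial_translation {z} id"
  unfolding partial_translation_def by auto

context
  fixes x0 :: "'a::metric_space"
  assumes ulf: "uniformly_locally_finite TYPE('a)" and inf: "infinite (UNIV :: 'a set)"
begin

lemma E_delta:
  "Ad (Wop (xi x0)) (Wop (xi x0)) (pt_op {z} id) (delta v) = (\<lambda>y. cnj (Wop (xi x0) (delta z) v) * Wop (xi x0) (delta z) y)"
proof -
  have Wb: "bounded_op (Wop (xi x0))" by (rule Wb[OF ulf inf])
  have a: "is_adjoint (Wop (xi x0)) (Wop (xi x0))" using WW[OF ulf inf] unfolding upair_def by blast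
  have Wv: "Wop (xi x0) (delta v) \<in> ell2" by (rule bop_ell2[OF Wb])
  have "Wop (xi x0) (delta v) z = l2inner (delta z) (Wop (xi x0) (delta v))" by (simp add: l2inner_delta1)
  also have "\<dots> = l2inner (Wop (xi x0) (delta z)) (delta v)" using a unfolding is_adjoint_def by simp
  also have "\<dots> = cnj (Wop (xi x0) (delta z) v)" by (simp add: l2inner_delta2)
  finally have c: "Wop (xi x0) (delta v) z = cnj (Wop (xi x0) (delta z) v)" .
  have "Ad (Wop (xi x0)) (Wop (xi x0)) (pt_op {z} id) (delta v) = Wop (xi x0) (\<lambda>x. Wop (xi x0) (delta v) z * delta z x)"
    unfolding Ad_def using pt_single_id[OF Wv] by simp
  also have "\<dots> = (\<lambda>x. Wop (xi x0) (delta v) z * Wop (xi x0) (delta z) x)"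
    by (rule bop_scale[OF Wb ell2_delta])
  finally show ?thesis unfolding c .
qed

lemma alphaE_delta:
  "alpha (hx x0) t (Ad (Wop (xi x0)) (Wop (xi x0)) (pt_op {z} id)) (delta v) y =
     cis (t * of_int (hx x0 y - hx x0 v)) * (cnj (Wop (xi x0) (delta z) v) * Wop (xi x0) (delta z) y)"
proof -
  define E where "E = Ad (Wop (xi x0)) (Wop (xi x0)) (pt_op {z} id)"
  have Eb: "bounded_op E" unfolding E_def by (intro Ad_bounded(1)[OF WW[OF ulf inf]] bounded_pt_op)
  have u1: "uu (hx x0) (-t) (delta v) = (\<lambda>x. cis (- t * of_int (hx x0 v)) * delta v x)"
  proof (rule ext)
    fix x
    have "uu (hx x0) (-t) (delta v) x = cis (- t * of_int (hx x0 x)) * delta v x"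
      by (simp add: uu_def mop_def)
    then show "uu (hx x0) (-t) (delta v) x = cis (- t * of_int (hx x0 v)) * delta v x"
      by (cases "x = v") (simp_all add: delta_def)
  qed
  have "E (uu (hx x0) (-t) (delta v)) = (\<lambda>x. cis (- t * of_int (hx x0 v)) * E (delta v) x)"
    unfolding u1 by (rule bop_scale[OF Eb ell2_delta])
  moreover have "alpha (hx x0) t E (delta v) y = cis (t * of_int (hx x0 y)) * E (uu (hx x0) (-t) (delta v)) y"
  proof -
    have "E (uu (hx x0) (-t) (delta v)) \<in> ell2" by (rule bop_ell2[OF Eb])
    then show ?thesis unfolding alpha_def Ad_def uu_def mop_def by simp
  qed
  ultimately have "alpha (hx x0) t E (delta v) y = cis (t * of_int (hx x0 y)) * (cis (- t * of_int (hx x0 v)) * E (delta v) y)"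
    by simp
  also have "\<dots> = (cis (t * of_int (hx x0 y)) * cis (- t * of_int (hx x0 v))) * E (delta v) y"
    by (rule mult.assoc[symmetric])
  also have "cis (t * of_int (hx x0 y)) * cis (- t * of_int (hx x0 v)) = cis (t * of_int (hx x0 y - hx x0 v))"
    unfolding cis_mult by (simp add: algebra_simps)
  finally show ?thesis unfolding E_def E_delta .
qed

end


lemma final_arith:
  fixes B c :: real
  assumes a: "\<And>k::nat. k \<ge> 2 \<Longrightarrow> (4 ^ k - c) * (3/4) * ((3/2) * (1/2) ^ k) \<le> B"
  shows False
proof -
  obtain n :: nat where n: "(8/9) * B + \<bar>c\<bar> < real n" using reals_Archimedean2 by blast
  define k where "k = n + 2"
  have k2: "k \<ge> 2" unfolding k_def by simp
  have p: "(4::real) ^ k * (1/2) ^ k = 2 ^ k" by (simp add: power_mult_distrib[symmetric])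
  have h1: "(1/2::real) ^ k \<le> 1" by (simp add: power_le_one)
  have h0: "0 \<le> (1/2::real) ^ k" by simp
  have cu: "c * (1/2) ^ k \<le> \<bar>c\<bar>"
    using h1 h0 by (smt (verit) mult_left_le mult_nonneg_nonneg mult_nonpos_nonneg abs_ge_self)
  have eq: "(4 ^ k - c) * (3/4) * ((3/2) * (1/2) ^ k) = (9/8) * (4 ^ k * (1/2) ^ k - c * (1/2) ^ k)"
  proof -
    have "\<And>v u c::real. (v - c) * (3/4) * ((3/2) * u) = (9/8) * (v * u - c * u)"
      by (simp add: field_simps | algebra)
    then show ?thesis .
  qed
  have "(9/8) * (2 ^ k - \<bar>c\<bar>) \<le> (9/8) * (4 ^ k * (1/2) ^ k - c * (1/2) ^ k)"
    unfolding p using cu by simp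
  also have "\<dots> = (4 ^ k - c) * (3/4) * ((3/2) * (1/2) ^ k)" by (rule eq[symmetric])
  also have "\<dots> \<le> B" by (rule a[OF k2])
  finally have "(9/8) * (2 ^ k - \<bar>c\<bar>) \<le> B" .
  then have "(2::real) ^ k \<le> (8/9) * B + \<bar>c\<bar>" by simp
  moreover have "real n < 2 ^ n" using less_exp[of n] by (metis of_nat_less_iff of_nat_numeral of_nat_power)
  moreover have "(2::real) ^ n \<le> 2 ^ k" unfolding k_def by (rule power_increasing) simp_all
  ultimately show False using n by simp
qed

context
  fixes x0 :: "'a::metric_space"
  assumes ulf: "uniformly_locally_finite TYPE('a)" and inf: "infinite (UNIV :: 'a set)"
begin

lemma eta: "Wop (xi x0) (delta x0) y = delta x0 y - complex_of_real (3/2) * xi x0 y"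
proof -
  have "l2inner (xi x0) (delta x0) = 1"
    using xi_seqp[OF ulf inf, where k=0] by (simp add: l2inner_delta2)
  then show ?thesis by (simp add: Wop_def nsq_xi[OF ulf inf])
qed

lemma eta_seq: "k \<ge> 1 \<Longrightarrow> cmod (Wop (xi x0) (delta x0) (seqp x0 k)) = (3/2) * (1/2) ^ k"
proof -
  assume k: "k \<ge> 1"
  have "seqp x0 k \<noteq> seqp x0 0" using seqp_inj[OF ulf inf] k by (metis inj_eq not_one_le_zero)
  then have ne: "seqp x0 k \<noteq> x0" by simp
  show ?thesis unfolding eta using ne
    by (simp add: delta_def xi_seqp[OF ulf inf] norm_mult norm_power norm_divide)
qed

lemma nondiff: "\<not> norm_differentiable_at (\<lambda>t. sig x0 t (pt_op {x0} id)) t0"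
proof
  assume "norm_differentiable_at (\<lambda>t. sig x0 t (pt_op {x0} id)) t0"
  then obtain D where D: "bounded_op D" and
    lim: "((\<lambda>s. op_norm (op_diff (op_scale (complex_of_real (1 / s)) (op_diff (sig x0 (t0 + s) (pt_op {x0} id)) (sig x0 t0 (pt_op {x0} id)))) D)) \<longlongrightarrow> 0) (at 0)"
    unfolding norm_differentiable_at_def by blast
  define W where "W = Wop (xi x0)"
  have WWp: "upair W W" unfolding W_def by (rule WW[OF ulf inf])
  define e where "e = pt_op {x0} (id :: 'a \<Rightarrow> 'a)"
  define E where "E = Ad W W e"
  define h where "h = hx x0"
  have Eb: "bounded_op E" unfolding E_def e_def by (intro Ad_bounded(1)[OF WWp] bounded_pt_op)
  have sigE: "sig x0 t e = Ad W W (alpha h t E)" for t by (simp add: sig_def E_def W_def h_def)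
  have bk: "Ad W W (sig x0 t e) = alpha h t E" for t
    unfolding sigE by (rule Ad_inv[OF WWp alpha_bounded[OF Eb]])
  have sb: "bounded_op (sig x0 t e)" for t
    unfolding e_def by (intro roe_bounded sig_roe[OF ulf inf] pt_in_roe pt_single_pt)
  define D' where "D' = Ad W W D"
  have D'b: "bounded_op D'" unfolding D'_def by (rule Ad_bounded(1)[OF WWp D])
  define Q where "Q = (\<lambda>s. op_diff (op_scale (complex_of_real (1 / s)) (op_diff (sig x0 (t0 + s) e) (sig x0 t0 e))) D)"
  define Q' where "Q' = (\<lambda>s. op_diff (op_scale (complex_of_real (1 / s)) (op_diff (alpha h (t0 + s) E) (alpha h t0 E))) D')"
  have Qb: "bounded_op (Q s)" for s unfolding Q_def by (intro bounded_op_diff bounded_op_scale sb D)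
  have Q'b: "bounded_op (Q' s)" for s unfolding Q'_def by (intro bounded_op_diff bounded_op_scale alpha_bounded Eb D'b)
  have Qeq: "Ad W W (Q s) = Q' s" for s
  proof -
    have b1: "bounded_op (op_diff (sig x0 (t0 + s) e) (sig x0 t0 e))" by (intro bounded_op_diff sb)
    have b2: "bounded_op (op_scale (complex_of_real (1 / s)) (op_diff (sig x0 (t0 + s) e) (sig x0 t0 e)))"
      by (intro bounded_op_scale b1)
    show ?thesis unfolding Q_def Q'_def D'_def Ad_diff[OF WWp b2 D] Ad_scale[OF WWp b1] Ad_diff[OF WWp sb sb] bk ..
  qed
  have lim': "((\<lambda>s. op_norm (Q' s)) \<longlongrightarrow> 0) (at 0)"
  proof (rule Lim_null_comparison)
    show "((\<lambda>s. op_norm (Q s)) \<longlongrightarrow> 0) (at 0)" using lim unfolding Q_def e_def .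
    show "\<forall>\<^sub>F s in at 0. norm (op_norm (Q' s)) \<le> op_norm (Q s)"
    proof (intro always_eventually allI)
      fix s
      have "op_norm (Q' s) \<le> op_norm (Q s)" unfolding Qeq[symmetric] by (rule Ad_bounded(2)[OF WWp Qb])
      then show "norm (op_norm (Q' s)) \<le> op_norm (Q s)" using op_norm_nonneg[OF Q'b] by simp
    qed
  qed
  define w where "w = seqp x0 1"
  define \<eta> where "\<eta> = W (delta x0)"
  have entryb: "\<bar>real_of_int (h y - h w)\<bar> * (cmod (\<eta> w) * cmod (\<eta> y)) \<le> op_norm D'" for y
  proof -
    define a where "a = real_of_int (h y - h w)"
    define C where "C = cnj (\<eta> w) * \<eta> y"
    have aE: "alpha h t E (delta w) y = cis (t * a) * C" for t
      unfolding a_def C_def \<eta>_def E_def e_def W_def h_def by (rule alphaE_delta[OF ulf inf])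
    have l1: "((\<lambda>s. Q' s (delta w) y) \<longlongrightarrow> 0) (at 0)"
    proof (rule Lim_null_comparison[OF _ lim'], intro always_eventually allI)
      fix s show "norm (Q' s (delta w) y) \<le> op_norm (Q' s)" by (rule entry_bound[OF Q'b])
    qed
    have qe: "Q' s (delta w) y = complex_of_real (1 / s) * (cis ((t0 + s) * a) - cis (t0 * a)) * C - D' (delta w) y" for s
      unfolding Q'_def by (simp add: op_diff_def op_scale_def aE algebra_simps)
    have l2: "((\<lambda>s. complex_of_real (1 / s) * (cis ((t0 + s) * a) - cis (t0 * a)) * C) \<longlongrightarrow> D' (delta w) y) (at 0)"
    proof -
      have "((\<lambda>s. Q' s (delta w) y + D' (delta w) y) \<longlongrightarrow> 0 + D' (delta w) y) (at 0)"
        by (intro tendsto_add l1 tendsto_const)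
      then show ?thesis unfolding qe by simp
    qed
    have l3: "((\<lambda>s. complex_of_real (1 / s) * (cis ((t0 + s) * a) - cis (t0 * a)) * C) \<longlongrightarrow> \<i> * complex_of_real a * cis (t0 * a) * C) (at 0)"
      by (intro tendsto_mult_right cis_dq)
    have "D' (delta w) y = \<i> * complex_of_real a * cis (t0 * a) * C"
      using tendsto_unique[OF trivial_limit_at l2 l3] .
    then have "cmod (D' (delta w) y) = \<bar>a\<bar> * (cmod (\<eta> w) * cmod (\<eta> y))"
      by (simp add: C_def norm_mult)
    then show ?thesis using entry_bound[OF D'b, of w y] unfolding a_def by simp
  qed
  have ew: "cmod (\<eta> w) = 3/4" unfolding \<eta>_def W_def w_def using eta_seq[of 1] by simp
  show False
  proof (rule final_arith[of "real_of_int (h w)" "op_norm D'"])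
    fix k :: nat assume k: "k \<ge> 2"
    have ek: "cmod (\<eta> (seqp x0 k)) = (3/2) * (1/2) ^ k" unfolding \<eta>_def W_def using eta_seq k by simp
    have "dist (seqp x0 k) x0 > 4 ^ k" using seqp_ge[OF ulf inf, where n=k] k by simp
    then have "(4::int) ^ k \<le> floor (dist (seqp x0 k) x0)"
      unfolding le_floor_iff by simp
    then have "real_of_int (h (seqp x0 k)) \<ge> 4 ^ k" unfolding h_def hx_def
      by (metis of_int_le_iff of_int_numeral of_int_power)
    then have "4 ^ k - real_of_int (h w) \<le> \<bar>real_of_int (h (seqp x0 k) - h w)\<bar>"
      unfolding of_int_diff using abs_ge_self[of "real_of_int (h (seqp x0 k)) - real_of_int (h w)"] by linarith
    then have "(4 ^ k - real_of_int (h w)) * (3/4 * ((3/2) * (1/2) ^ k)) \<le> \<bar>real_of_int (h (seqp x0 k) - h w)\<bar> * (cmod (\<eta> w) * cmod (\<eta> (seqp x0 k)))"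
      unfolding ew ek by (intro mult_right_mono) simp_all
    also have "\<dots> \<le> op_norm D'" by (rule entryb)
    finally show "(4 ^ k - real_of_int (h w)) * (3/4) * ((3/2) * (1/2) ^ k) \<le> op_norm D'" by (simp only: mult.assoc)
  qed
qed

end

theorem proposition5p1p4:
  assumes "uniformly_locally_finite TYPE('a::metric_space)"
    and "infinite (UNIV :: 'a set)"
  shows "\<exists>\<sigma>. is_flow (uniform_roe :: 'a op set) \<sigma> \<and> \<not> coarse_flow (uniform_roe :: 'a op set) \<sigma>"
proof -
  fix x0 :: 'a
  have "is_flow uniform_roe (sig x0)" by (rule sig_flow[OF assms])
  moreover have "\<not> coarse_flow uniform_roe (sig x0)"
    unfolding coarse_flow_def using nondiff[OF assms, of x0 0] pt_single_pt[of x0] by blast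
  ultimately show ?thesis by blast
qed


end
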